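(* Let $\mathscr{H}$ be a complex Hilbert space and $\mathcal{A}\subseteq\mathcal{B}(\mathscr{H})$ a von Neumann algebra. Then $\mathrm{Col}(\mathcal{A})=\mathrm{Col}(\mathcal{A}')$.
   Context: A von Neumann algebra is a self-adjoint, strong-operator-topology closed subalgebra of $\mathcal{B}(\mathscr{H})$ containing the identity; $\mathcal{A}'$ is its commutant. For a set $\mathcal{S}$ of operators, $\mathrm{Lat}(\mathcal{S})$ is the set of closed subspaces invariant for all operators in $\mathcal{S}$, and $\mathrm{Col}(\mathcal{S})$ is the group of invertible $S\in\mathcal{B}(\mathscr{H})$ such that for every closed subspace $\mathscr{M}$: $\mathscr{M}\in\mathrm{Lat}(\mathcal{S})$ iff $S\mathscr{M}\in\mathrm{Lat}(\mathcal{S})$. *)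

theory Defs
  imports "HOL-Analysis.Analysis"
begin

text \<open>Inner product is linear in the
  second argument and conjugate-linear in the first.\<close>

class complex_vector = real_vector +
  fixes scaleC :: "complex \<Rightarrow> 'a \<Rightarrow> 'a" (infixr \<open>*\<^sub>C\<close> 75)
  assumes scaleC_add_right: "a *\<^sub>C (x + y) = a *\<^sub>C x + a *\<^sub>C y"
    and scaleC_add_left: "(a + b) *\<^sub>C x = a *\<^sub>C x + b *\<^sub>C x"
    and scaleC_scaleC: "a *\<^sub>C (b *\<^sub>C x) = (a * b) *\<^sub>C x"
    and scaleC_one: "1 *\<^sub>C x = x"
    and scaleR_scaleC: "scaleR r = scaleC (complex_of_real r)"

class complex_normed_vector = complex_vector + real_normed_vector +
  assumes norm_scaleC: "norm (a *\<^sub>C x) = cmod a * norm x"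

class complex_inner = complex_normed_vector +
  fixes cinner :: "'a \<Rightarrow> 'a \<Rightarrow> complex"
  assumes cinner_conj_commute: "cinner x y = cnj (cinner y x)"
    and cinner_add_right: "cinner x (y + z) = cinner x y + cinner x z"
    and cinner_scaleC_right: "cinner x (a *\<^sub>C y) = a * cinner x y"
    and cinner_self_real: "Im (cinner x x) = 0"
    and cinner_self_nonneg: "Re (cinner x x) \<ge> 0"
    and cinner_self_eq_zero: "cinner x x = 0 \<longleftrightarrow> x = 0"
    and norm_eq_sqrt_cinner: "norm x = sqrt (Re (cinner x x))"

class chilbert_space = complex_inner + complete_space

definition bounded_clinear :: "('a::complex_normed_vector \<Rightarrow> 'b::complex_normed_vector) \<Rightarrow> bool" where
  "bounded_clinear T \<longleftrightarrow>
     (\<forall>x y. T (x + y) = T x + T y) \<and> (\<forall>c x. T (c *\<^sub>C x) = c *\<^sub>C T x) \<and>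
     (\<exists>K. \<forall>x. norm (T x) \<le> norm x * K)"

definition BH :: "('a::complex_normed_vector \<Rightarrow> 'a) set" where
  "BH = {T. bounded_clinear T}"

definition is_adjoint :: "('a::complex_inner \<Rightarrow> 'a) \<Rightarrow> ('a \<Rightarrow> 'a) \<Rightarrow> bool" where
  "is_adjoint S T \<longleftrightarrow> (\<forall>x y. cinner (T x) y = cinner x (S y))"

text \<open>Strong operator topology on B(H): the topology of pointwise convergence, i.e. the
  subspace topology of the product topology on functions (HOL-Analysis Function_Topology).\<close>

definition von_neumann_algebra :: "('a::chilbert_space \<Rightarrow> 'a) set \<Rightarrow> bool" where
  "von_neumann_algebra A \<longleftrightarrow>
     A \<subseteq> BH \<and> id \<in> A \<and>
     (\<forall>S\<in>A. \<forall>T\<in>A. (\<lambda>x. S x + T x) \<in> A \<and> S \<circ> T \<in> A) \<and>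
     (\<forall>c. \<forall>S\<in>A. (\<lambda>x. c *\<^sub>C S x) \<in> A) \<and>
     (\<forall>T\<in>A. \<exists>S\<in>A. is_adjoint S T) \<and>
     closedin (top_of_set BH) A"

definition commutant :: "('a::complex_normed_vector \<Rightarrow> 'a) set \<Rightarrow> ('a \<Rightarrow> 'a) set" where
  "commutant A = {T \<in> BH. \<forall>S\<in>A. T \<circ> S = S \<circ> T}"

definition closed_csubspace :: "'a::complex_normed_vector set \<Rightarrow> bool" where
  "closed_csubspace M \<longleftrightarrow>
     0 \<in> M \<and> (\<forall>x\<in>M. \<forall>y\<in>M. x + y \<in> M) \<and> (\<forall>c. \<forall>x\<in>M. c *\<^sub>C x \<in> M) \<and> closed M"

definition Lat :: "('a::complex_normed_vector \<Rightarrow> 'a) set \<Rightarrow> 'a set set" where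
  "Lat S = {M. closed_csubspace M \<and> (\<forall>T\<in>S. T ` M \<subseteq> M)}"

definition invertible_op :: "('a::complex_normed_vector \<Rightarrow> 'a) \<Rightarrow> bool" where
  "invertible_op T \<longleftrightarrow> T \<in> BH \<and> (\<exists>U\<in>BH. U \<circ> T = id \<and> T \<circ> U = id)"

definition Col :: "('a::complex_normed_vector \<Rightarrow> 'a) set \<Rightarrow> ('a \<Rightarrow> 'a) set" where
  "Col S = {T. invertible_op T \<and>
     (\<forall>M. closed_csubspace M \<longrightarrow> (M \<in> Lat S \<longleftrightarrow> T ` M \<in> Lat S))}"

end

theory Submission
  imports Defs
begin


lemma scaleC_of_real: "complex_of_real r *\<^sub>C x = r *\<^sub>R x"
  by (simp add: scaleR_scaleC)

lemma scaleC_zero_left[simp]: "0 *\<^sub>C x = 0"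
  using scaleC_of_real[of 0 x] by simp

lemma scaleC_zero_right[simp]: "a *\<^sub>C (0::'a::complex_vector) = 0"
proof -
  have h: "a *\<^sub>C (0::'a) = a *\<^sub>C 0 + a *\<^sub>C 0" using scaleC_add_right[of a 0 0] by simp
  then show ?thesis by (simp only: add_cancel_right_right)
qed

lemma scaleC_minus_right: "a *\<^sub>C (- x) = - (a *\<^sub>C (x::'a::complex_vector))"
proof -
  have "a *\<^sub>C (- x) + a *\<^sub>C x = 0" using scaleC_add_right[of a "-x" x, symmetric] by simp
  then show ?thesis by (simp add: eq_neg_iff_add_eq_0)
qed

lemma scaleC_minus_left: "(- a) *\<^sub>C x = - (a *\<^sub>C (x::'a::complex_vector))"
proof -
  have "(- a) *\<^sub>C x + a *\<^sub>C x = 0" using scaleC_add_left[of "-a" a x, symmetric] by simp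
  then show ?thesis by (simp add: eq_neg_iff_add_eq_0)
qed

lemma scaleC_diff_right: "a *\<^sub>C (x - y) = a *\<^sub>C x - a *\<^sub>C (y::'a::complex_vector)"
  unfolding diff_conv_add_uminus by (simp only: scaleC_add_right scaleC_minus_right)

lemma scaleC_diff_left: "(a - b) *\<^sub>C x = a *\<^sub>C x - b *\<^sub>C (x::'a::complex_vector)"
  unfolding diff_conv_add_uminus by (simp only: scaleC_add_left scaleC_minus_left)

lemma scaleC_one'[simp]: "1 *\<^sub>C x = x"
  by (rule scaleC_one)

lemma cinner_add_left: "cinner (x + y) z = cinner x z + cinner y z"
  by (metis cinner_conj_commute cinner_add_right complex_cnj_add)

lemma cinner_scaleC_left: "cinner (a *\<^sub>C x) y = cnj a * cinner x y"
  by (metis cinner_conj_commute cinner_scaleC_right complex_cnj_mult)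

lemma cinner_zero_right[simp]: "cinner x 0 = 0"
  using cinner_scaleC_right[of x 0 0] by simp

lemma cinner_zero_left[simp]: "cinner 0 x = 0"
  by (metis cinner_conj_commute cinner_zero_right complex_cnj_zero)

lemma cinner_minus_right: "cinner x (- y) = - cinner x y"
proof -
  have "cinner x (- y) + cinner x y = 0" using cinner_add_right[of x "-y" y, symmetric] by simp
  then show ?thesis by (simp add: eq_neg_iff_add_eq_0)
qed

lemma cinner_minus_left: "cinner (- x) y = - cinner x y"
proof -
  have "cinner (- x) y + cinner x y = 0" using cinner_add_left[of "-x" x y, symmetric] by simp
  then show ?thesis by (simp add: eq_neg_iff_add_eq_0)
qed

lemma cinner_diff_right: "cinner x (y - z) = cinner x y - cinner x z"
  unfolding diff_conv_add_uminus by (simp only: cinner_add_right cinner_minus_right)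

lemma cinner_diff_left: "cinner (x - y) z = cinner x z - cinner y z"
  unfolding diff_conv_add_uminus by (simp only: cinner_add_left cinner_minus_left)

lemma cinner_scaleR_right: "cinner x (r *\<^sub>R y) = complex_of_real r * cinner x y"
  by (simp add: scaleR_scaleC cinner_scaleC_right)

lemma cinner_scaleR_left: "cinner (r *\<^sub>R x) y = complex_of_real r * cinner x y"
  by (simp add: scaleR_scaleC cinner_scaleC_left)

lemma cinner_self_of_real: "cinner x x = complex_of_real ((norm x)\<^sup>2)"
proof -
  have "Re (cinner x x) = (norm x)\<^sup>2"
    using norm_eq_sqrt_cinner[of x] cinner_self_nonneg[of x] by simp
  then show ?thesis using cinner_self_real[of x] by (simp add: complex_eq_iff)
qed

lemma norm_sq_cinner: "(norm x)\<^sup>2 = Re (cinner x x)"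
  by (simp add: cinner_self_of_real)

lemma cinner_sum_sq: "(norm (x + y))\<^sup>2 = (norm x)\<^sup>2 + (norm y)\<^sup>2 + 2 * Re (cinner x y)"
proof -
  have "Re (cinner y x) = Re (cinner x y)" by (metis cinner_conj_commute complex_cnj_cnj cnj.simps(1))
  then show ?thesis by (simp add: norm_sq_cinner cinner_add_left cinner_add_right)
qed

lemma cinner_diff_sq: "(norm (x - y))\<^sup>2 = (norm x)\<^sup>2 + (norm y)\<^sup>2 - 2 * Re (cinner x y)"
  using cinner_sum_sq[of x "- y"] by (simp add: cinner_minus_right)

lemma pythagoras: "cinner x y = 0 \<Longrightarrow> (norm (x + y))\<^sup>2 = (norm x)\<^sup>2 + (norm y)\<^sup>2"
  by (simp add: cinner_sum_sq)

lemma cinner_eq_zero_sym: "cinner x y = 0 \<longleftrightarrow> cinner y x = 0"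
  by (metis cinner_conj_commute complex_cnj_zero_iff)

lemma cinner_self_eq_0: "cinner x x = 0 \<longleftrightarrow> x = 0"
  by (rule cinner_self_eq_zero)

lemma Cauchy_Schwarz: "cmod (cinner x y) \<le> norm x * norm y"
proof (cases "y = 0")
  case True then show ?thesis by simp
next
  case False
  define a where "a = cinner y x / complex_of_real ((norm y)\<^sup>2)"
  have ny: "norm y > 0" using False by simp
  have "0 \<le> (norm (x - a *\<^sub>C y))\<^sup>2" by simp
  also have "(norm (x - a *\<^sub>C y))\<^sup>2 = Re (cinner (x - a *\<^sub>C y) (x - a *\<^sub>C y))"
    by (rule norm_sq_cinner)
  also have "cinner (x - a *\<^sub>C y) (x - a *\<^sub>C y) =
     cinner x x - a * cinner x y - cnj a * cinner y x + cnj a * a * cinner y y"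
    by (simp add: cinner_diff_left cinner_diff_right cinner_scaleC_left cinner_scaleC_right
        algebra_simps)
  also have "cnj a * a * cinner y y = cnj a * cinner y x"
    using ny by (simp add: a_def cinner_self_of_real field_simps)
  also have "a * cinner x y = (cmod (cinner x y))\<^sup>2 / (norm y)\<^sup>2"
  proof -
    have "cinner y x * cinner x y = complex_of_real ((cmod (cinner x y))\<^sup>2)"
      by (metis cinner_conj_commute complex_norm_square mult.commute complex_mult_cnj)
    then show ?thesis by (simp add: a_def field_simps)
  qed
  finally have "0 \<le> (norm x)\<^sup>2 - (cmod (cinner x y))\<^sup>2 / (norm y)\<^sup>2"
    by (simp add: cinner_self_of_real)
  then have "(cmod (cinner x y))\<^sup>2 \<le> (norm x)\<^sup>2 * (norm y)\<^sup>2"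
    using ny by (simp add: field_simps)
  then have "(cmod (cinner x y))\<^sup>2 \<le> (norm x * norm y)\<^sup>2" by (simp add: power_mult_distrib)
  then show ?thesis by (rule power2_le_imp_le) simp
qed

lemma Re_cinner_le: "Re (cinner x y) \<le> norm x * norm y"
  using Cauchy_Schwarz[of x y] abs_Re_le_cmod[of "cinner x y"] by linarith

lemma abs_Re_cinner_le: "\<bar>Re (cinner x y)\<bar> \<le> norm x * norm y"
  using Cauchy_Schwarz[of x y] abs_Re_le_cmod[of "cinner x y"] by linarith

lemma cinner_ext: "(\<And>x. cinner x y = cinner x z) \<Longrightarrow> y = z"
  by (metis cinner_diff_right cinner_self_eq_zero right_minus_eq)

lemma bounded_linear_cinner_right: "bounded_linear (\<lambda>y. cinner x y)"
  apply (rule bounded_linear_intro[where K = "norm x"])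
    apply (simp add: cinner_add_right)
   apply (simp add: cinner_scaleR_right scaleR_conv_of_real)
  by (metis Cauchy_Schwarz mult.commute)

lemma tendsto_cinner_right: "(f \<longlongrightarrow> l) F \<Longrightarrow> ((\<lambda>n. cinner x (f n)) \<longlongrightarrow> cinner x l) F"
  using bounded_linear.tendsto[OF bounded_linear_cinner_right] by blast

lemma continuous_cinner_right: "continuous_on UNIV (\<lambda>y. cinner x y)"
  using bounded_linear_cinner_right linear_continuous_on by blast

lemma closed_orth_single: "closed {y. cinner x y = 0}"
proof -
  have "{y. cinner x y = 0} = (\<lambda>y. cinner x y) -` {0}" by auto
  then show ?thesis using continuous_closed_vimage[OF closed_singleton] continuous_cinner_right
    by (metis continuous_on_eq_continuous_within iso_tuple_UNIV_I)
qed



lemma csub_0: "closed_csubspace M \<Longrightarrow> 0 \<in> M"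
  by (simp add: closed_csubspace_def)
lemma csub_add: "closed_csubspace M \<Longrightarrow> x \<in> M \<Longrightarrow> y \<in> M \<Longrightarrow> x + y \<in> M"
  by (simp add: closed_csubspace_def)
lemma csub_scaleC: "closed_csubspace M \<Longrightarrow> x \<in> M \<Longrightarrow> c *\<^sub>C x \<in> M"
  by (simp add: closed_csubspace_def)
lemma csub_closed: "closed_csubspace M \<Longrightarrow> closed M"
  by (simp add: closed_csubspace_def)
lemma csub_scaleR: "closed_csubspace M \<Longrightarrow> x \<in> M \<Longrightarrow> r *\<^sub>R x \<in> M"
  by (simp add: closed_csubspace_def scaleR_scaleC)
lemma csub_minus: "closed_csubspace M \<Longrightarrow> x \<in> M \<Longrightarrow> - x \<in> M"
  using csub_scaleR[of M x "-1"] by simp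
lemma csub_diff: "closed_csubspace M \<Longrightarrow> x \<in> M \<Longrightarrow> y \<in> M \<Longrightarrow> x - y \<in> M"
  using csub_add[of M x "-y"] csub_minus[of M y] by simp

section \<open>Projection theorem\<close>

lemma nearest_exists:
  fixes x :: "'a::chilbert_space"
  assumes M: "closed_csubspace M"
  shows "\<exists>p\<in>M. \<forall>m\<in>M. norm (x - p) \<le> norm (x - m)"
proof -
  define d where "d = infdist x M"
  define e where "e = (\<lambda>n::nat. inverse (real (Suc n)))"
  have e0: "\<And>n. e n > 0" by (simp add: e_def)
  have ne: "M \<noteq> {}" using csub_0[OF M] by auto
  have "\<forall>n::nat. \<exists>a\<in>M. dist x a < d + e n"
  proof
    fix n
    have "infdist x M < d + e n" using e0[of n] by (simp add: d_def)
    then show "\<exists>a\<in>M. dist x a < d + e n" using ne by (simp add: infdist_notempty cINF_less_iff)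
  qed
  then obtain f where f: "\<And>n. f n \<in> M" "\<And>n. norm (x - f n) < d + e n"
    by (metis dist_norm)
  have dle: "\<And>m. m \<in> M \<Longrightarrow> d \<le> norm (x - m)" by (metis d_def dist_norm infdist_le)
  have d0: "d \<ge> 0" by (simp add: d_def infdist_nonneg)
  have key: "(norm (f n - f k))\<^sup>2 \<le> 2*(d + e n)\<^sup>2 + 2*(d + e k)\<^sup>2 - 4*d\<^sup>2" for n k
  proof -
    define u where "u = x - f n"
    define v where "v = x - f k"
    have par: "(norm (u - v))\<^sup>2 + (norm (u + v))\<^sup>2 = 2*(norm u)\<^sup>2 + 2*(norm v)\<^sup>2"
      using cinner_sum_sq[of u v] cinner_diff_sq[of u v] by simp
    have "u + v = 2 *\<^sub>R (x - (1/2) *\<^sub>R (f n + f k))" by (simp add: u_def v_def algebra_simps scaleR_2)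
    then have "norm (u + v) = 2 * norm (x - (1/2) *\<^sub>R (f n + f k))" by simp
    moreover have "(1/2) *\<^sub>R (f n + f k) \<in> M" using M f(1) csub_add csub_scaleR by blast
    ultimately have "norm (u + v) \<ge> 2 * d" using dle by fastforce
    then have s1: "(norm (u + v))\<^sup>2 \<ge> (2*d)\<^sup>2" using d0 by (intro power_mono) auto
    have "norm u \<le> d + e n" using f(2)[of n] by (simp add: u_def)
    then have s2: "(norm u)\<^sup>2 \<le> (d + e n)\<^sup>2" by (intro power_mono) auto
    have "norm v \<le> d + e k" using f(2)[of k] by (simp add: v_def)
    then have s3: "(norm v)\<^sup>2 \<le> (d + e k)\<^sup>2" by (intro power_mono) auto
    have "u - v = f k - f n" by (simp add: u_def v_def)
    then have "norm (u - v) = norm (f n - f k)" by (simp add: norm_minus_commute)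
    then show ?thesis using par s1 s2 s3 by (simp add: power_mult_distrib)
  qed
  have "Cauchy f"
  proof (rule metric_CauchyI)
    fix r :: real assume r: "r > 0"
    have "r\<^sup>2 / (4 * (2*d + 1)) > 0" using r d0 by simp
    then obtain N where N: "inverse (real (Suc N)) < r\<^sup>2 / (4 * (2*d + 1))"
      using reals_Archimedean by blast
    have "\<forall>m\<ge>N. \<forall>n\<ge>N. dist (f m) (f n) < r"
    proof (intro allI impI)
      fix m n assume mn: "m \<ge> N" "n \<ge> N"
      have em: "e m \<le> e N" "e n \<le> e N" using mn by (auto simp: e_def intro!: le_imp_inverse_le)
      have eN: "0 < e N" "e N \<le> 1" by (auto simp: e_def inverse_le_1_iff)
      have "2*(d + e m)\<^sup>2 \<le> 2*(d + e N)\<^sup>2" using em e0[of m] d0 by (intro mult_left_mono power_mono) auto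
      moreover have "2*(d + e n)\<^sup>2 \<le> 2*(d + e N)\<^sup>2" using em e0[of n] d0 by (intro mult_left_mono power_mono) auto
      ultimately have "(norm (f m - f n))\<^sup>2 \<le> 4 * (d + e N)\<^sup>2 - 4*d\<^sup>2" using key[of m n] by linarith
      also have "\<dots> = 4 * e N * (2*d + e N)" by (simp add: power2_eq_square algebra_simps)
      also have "\<dots> \<le> 4 * e N * (2*d + 1)" using eN by (intro mult_left_mono) auto
      also have "\<dots> < 4 * (r\<^sup>2 / (4 * (2*d + 1))) * (2*d + 1)"
        using N d0 by (intro mult_strict_right_mono) (auto simp: e_def)
      also have "\<dots> = r\<^sup>2" using d0 by (simp add: field_simps)
      finally have "(norm (f m - f n))\<^sup>2 < r\<^sup>2" .
      then have "norm (f m - f n) < r" using r by (simp add: power_less_imp_less_base)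
      then show "dist (f m) (f n) < r" by (simp add: dist_norm)
    qed
    then show "\<exists>N. \<forall>m\<ge>N. \<forall>n\<ge>N. dist (f m) (f n) < r" by blast
  qed
  then obtain p where p: "f \<longlonglongrightarrow> p" using Cauchy_convergent_iff convergent_def by blast
  have pM: "p \<in> M" using closed_sequentially[OF csub_closed[OF M] f(1) p] .
  have l1: "(\<lambda>n. norm (x - f n)) \<longlonglongrightarrow> norm (x - p)" using p by (intro tendsto_intros)
  have l2: "(\<lambda>n. d + e n) \<longlonglongrightarrow> d"
    using tendsto_add[OF tendsto_const LIMSEQ_inverse_real_of_nat, of d] by (simp add: e_def)
  have "norm (x - p) \<le> d"
    using f(2) by (intro tendsto_le[OF trivial_limit_sequentially l2 l1] always_eventually allI less_imp_le)
  then show ?thesis using pM dle by force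
qed

lemma nearest_orth:
  fixes x :: "'a::complex_inner"
  assumes M: "closed_csubspace M" and pM: "p \<in> M" and pmin: "\<forall>m\<in>M. norm (x - p) \<le> norm (x - m)"
    and w: "w \<in> M"
  shows "cinner w (x - p) = 0"
proof (rule ccontr)
  define z where "z = x - p"
  define a where "a = cinner w z"
  assume "cinner w (x - p) \<noteq> 0"
  then have a0: "a \<noteq> 0" by (simp add: a_def z_def)
  have ineq: "2 * (cmod a)\<^sup>2 \<le> t * (cmod a)\<^sup>2 * (norm w)\<^sup>2" if t: "t > 0" for t :: real
  proof -
    define c where "c = complex_of_real t * a"
    have "p + c *\<^sub>C w \<in> M" using M pM w csub_add csub_scaleC by blast
    then have "norm z \<le> norm (z - c *\<^sub>C w)" using pmin by (force simp: z_def algebra_simps)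
    then have "(norm z)\<^sup>2 \<le> (norm (z - c *\<^sub>C w))\<^sup>2" by (intro power_mono) auto
    also have "\<dots> = (norm z)\<^sup>2 + (norm (c *\<^sub>C w))\<^sup>2 - 2 * Re (cinner z (c *\<^sub>C w))"
      by (rule cinner_diff_sq)
    also have "cinner z (c *\<^sub>C w) = complex_of_real (t * (cmod a)\<^sup>2)"
    proof -
      have "cinner z w = cnj a" by (simp add: a_def cinner_conj_commute[of w z])
      then have "cinner z (c *\<^sub>C w) = complex_of_real t * (a * cnj a)"
        by (simp add: cinner_scaleC_right c_def)
      also have "a * cnj a = complex_of_real ((cmod a)\<^sup>2)" using complex_norm_square[of a] by simp
      finally show ?thesis by simp
    qed
    also have "norm (c *\<^sub>C w) = t * cmod a * norm w"
      using t by (simp add: norm_scaleC c_def norm_mult)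
    finally have "0 \<le> (t * cmod a * norm w)\<^sup>2 - 2 * (t * (cmod a)\<^sup>2)" by simp
    then have "2 * t * (cmod a)\<^sup>2 \<le> t * (t * (cmod a)\<^sup>2 * (norm w)\<^sup>2)"
      by (simp add: power_mult_distrib power2_eq_square algebra_simps)
    then show ?thesis using t by (simp add: mult_le_cancel_left algebra_simps)
  qed
  define t where "t = 1 / ((norm w)\<^sup>2 + 1)"
  have t0: "t > 0" unfolding t_def using zero_le_power2[of "norm w"] by (simp add: add_nonneg_pos)
  have "t * (norm w)\<^sup>2 < 1"
  proof -
    have p: "0 < (norm w)\<^sup>2 + 1" using zero_le_power2[of "norm w"] by (simp add: add_nonneg_pos)
    have "(norm w)\<^sup>2 < (norm w)\<^sup>2 + 1" by simp
    then have "(norm w)\<^sup>2 / ((norm w)\<^sup>2 + 1) < 1" using p by (simp only: divide_less_eq_1_pos)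
    then show ?thesis by (simp add: t_def)
  qed
  then have tw: "t * (norm w)\<^sup>2 < 1" .
  have ca: "(cmod a)\<^sup>2 > 0" using a0 by simp
  have "t * (cmod a)\<^sup>2 * (norm w)\<^sup>2 = (cmod a)\<^sup>2 * (t * (norm w)\<^sup>2)" by (simp add: algebra_simps)
  also have "\<dots> < (cmod a)\<^sup>2 * 1" using ca tw by (intro mult_strict_left_mono)
  also have "\<dots> < 2 * (cmod a)\<^sup>2" using ca by simp
  finally have "t * (cmod a)\<^sup>2 * (norm w)\<^sup>2 < 2 * (cmod a)\<^sup>2" .
  then show False using ineq[OF t0] by linarith
qed

definition orth :: "'a::complex_inner set \<Rightarrow> 'a set" where
  "orth M = {y. \<forall>x\<in>M. cinner x y = 0}"

definition proj :: "'a::complex_inner set \<Rightarrow> 'a \<Rightarrow> 'a" where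
  "proj M x = (THE p. p \<in> M \<and> (\<forall>m\<in>M. cinner m (x - p) = 0))"

lemma proj_char_exists:
  fixes x :: "'a::chilbert_space"
  assumes M: "closed_csubspace M"
  shows "\<exists>p. p \<in> M \<and> (\<forall>m\<in>M. cinner m (x - p) = 0)"
  using nearest_exists[OF M, of x] nearest_orth[OF M] by blast

lemma proj_char_unique:
  fixes x :: "'a::complex_inner"
  assumes M: "closed_csubspace M"
    and "p \<in> M" "\<forall>m\<in>M. cinner m (x - p) = 0"
    and "q \<in> M" "\<forall>m\<in>M. cinner m (x - q) = 0"
  shows "p = q"
proof -
  have pq: "p - q \<in> M" using assms csub_diff by blast
  have "cinner (p - q) (x - q) - cinner (p - q) (x - p) = 0" using assms pq by simp
  then have "cinner (p - q) (p - q) = 0" by (simp add: cinner_diff_right algebra_simps)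
  then show ?thesis using cinner_self_eq_zero[of "p - q"] by simp
qed

lemma proj_props:
  fixes x :: "'a::chilbert_space"
  assumes M: "closed_csubspace M"
  shows "proj M x \<in> M \<and> (\<forall>m\<in>M. cinner m (x - proj M x) = 0)"
proof -
  obtain p where p: "p \<in> M \<and> (\<forall>m\<in>M. cinner m (x - p) = 0)" using proj_char_exists[OF M] by blast
  have "proj M x = p" unfolding proj_def
    by (rule the_equality) (use p proj_char_unique[OF M] in blast)+
  then show ?thesis using p by simp
qed

lemma proj_in: "closed_csubspace M \<Longrightarrow> proj M (x::'a::chilbert_space) \<in> M"
  using proj_props by blast

lemma proj_orth: "closed_csubspace M \<Longrightarrow> m \<in> M \<Longrightarrow> cinner m ((x::'a::chilbert_space) - proj M x) = 0"
  using proj_props by blast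

lemma proj_eqI:
  fixes x :: "'a::chilbert_space"
  assumes M: "closed_csubspace M" and "p \<in> M" "\<And>m. m \<in> M \<Longrightarrow> cinner m (x - p) = 0"
  shows "proj M x = p"
  using proj_char_unique[OF M, of "proj M x" x p] proj_props[OF M, of x] assms by blast



definition clin :: "('a::complex_vector \<Rightarrow> 'b::complex_vector) \<Rightarrow> bool" where
  "clin T \<longleftrightarrow> (\<forall>x y. T (x + y) = T x + T y) \<and> (\<forall>c x. T (c *\<^sub>C x) = c *\<^sub>C T x)"

lemma bcl_def2: "bounded_clinear T \<longleftrightarrow> clin T \<and> (\<exists>K. \<forall>x. norm (T x) \<le> norm x * K)"
  by (simp add: bounded_clinear_def clin_def)

lemma bcl_clin: "bounded_clinear T \<Longrightarrow> clin T"
  by (simp add: bcl_def2)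

lemma clin_add: "clin T \<Longrightarrow> T (x + y) = T x + T y"
  by (simp add: clin_def)
lemma clin_scaleC: "clin T \<Longrightarrow> T (c *\<^sub>C x) = c *\<^sub>C T x"
  by (simp add: clin_def)
lemma clin_zero: "clin T \<Longrightarrow> T 0 = 0"
  using clin_scaleC[of T 0 0] by simp
lemma clin_scaleR: "clin T \<Longrightarrow> T (r *\<^sub>R x) = r *\<^sub>R T x"
  by (simp add: clin_scaleC scaleR_scaleC)
lemma clin_minus: "clin T \<Longrightarrow> T (- x) = - T x"
  using clin_scaleR[of T "-1" x] by simp
lemma clin_diff: "clin T \<Longrightarrow> T (x - y) = T x - T y"
  using clin_add[of T x "-y"] clin_minus[of T y] by simp

lemma bcl_bound: "bounded_clinear T \<Longrightarrow> \<exists>K>0. \<forall>x. norm (T x) \<le> K * norm x"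
proof -
  assume "bounded_clinear T"
  then obtain K where K: "\<And>x. norm (T x) \<le> norm x * K" by (auto simp: bcl_def2)
  have "norm (T x) \<le> (max K 1) * norm x" for x
  proof -
    have "norm (T x) \<le> norm x * K" by (rule K)
    also have "\<dots> \<le> norm x * max K 1" by (intro mult_left_mono) auto
    finally show ?thesis by (simp add: mult.commute)
  qed
  then show ?thesis by (intro exI[of _ "max K 1"]) auto
qed

lemma bcl_bounded_linear: "bounded_clinear T \<Longrightarrow> bounded_linear T"
proof -
  assume T: "bounded_clinear T"
  then obtain K where K: "\<And>x. norm (T x) \<le> norm x * K" by (auto simp: bcl_def2)
  show ?thesis
    by (rule bounded_linear_intro[of T K]) (use T K in \<open>auto simp: bcl_def2 clin_add clin_scaleR\<close>)
qed

lemma bcl_tendsto: "bounded_clinear T \<Longrightarrow> (f \<longlongrightarrow> l) F \<Longrightarrow> ((\<lambda>n. T (f n)) \<longlongrightarrow> T l) F"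
  using bcl_bounded_linear bounded_linear.tendsto by blast

lemma bcl_cont: "bounded_clinear T \<Longrightarrow> continuous (at x) T"
  using bcl_bounded_linear linear_continuous_at by blast

lemma bcl_id: "bounded_clinear (\<lambda>x. x)"
  unfolding bcl_def2 clin_def by (intro conjI exI[of _ 1]) auto

lemma bcl_id': "bounded_clinear id"
  using bcl_id by (simp add: id_def)

lemma bcl_comp: "bounded_clinear S \<Longrightarrow> bounded_clinear T \<Longrightarrow> bounded_clinear (\<lambda>x. S (T x))"
proof -
  assume S: "bounded_clinear S" and T: "bounded_clinear T"
  obtain K where K: "K > 0" "\<And>x. norm (S x) \<le> K * norm x" using bcl_bound[OF S] by blast
  obtain L where L: "L > 0" "\<And>x. norm (T x) \<le> L * norm x" using bcl_bound[OF T] by blast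
  have "norm (S (T x)) \<le> norm x * (K * L)" for x
  proof -
    have "norm (S (T x)) \<le> K * norm (T x)" by (rule K(2))
    also have "\<dots> \<le> K * (L * norm x)" using K(1) L(2) by (intro mult_left_mono) auto
    finally show ?thesis by (simp add: algebra_simps)
  qed
  then show ?thesis using S T unfolding bcl_def2 clin_def by auto
qed

lemma bcl_comp': "bounded_clinear S \<Longrightarrow> bounded_clinear T \<Longrightarrow> bounded_clinear (S \<circ> T)"
  using bcl_comp[of S T] by (simp add: comp_def)

lemma bcl_add: "bounded_clinear S \<Longrightarrow> bounded_clinear T \<Longrightarrow> bounded_clinear (\<lambda>x. S x + T x)"
proof -
  assume S: "bounded_clinear S" and T: "bounded_clinear T"
  obtain K where K: "K > 0" "\<And>x. norm (S x) \<le> K * norm x" using bcl_bound[OF S] by blast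
  obtain L where L: "L > 0" "\<And>x. norm (T x) \<le> L * norm x" using bcl_bound[OF T] by blast
  have "norm (S x + T x) \<le> norm x * (K + L)" for x
    using norm_triangle_ineq[of "S x" "T x"] K(2)[of x] L(2)[of x] by (simp add: algebra_simps)
  moreover have "clin (\<lambda>x. S x + T x)" using S T
    by (auto simp: clin_def bcl_def2 scaleC_add_right algebra_simps)
  ultimately show ?thesis unfolding bcl_def2 by blast
qed

lemma bcl_scaleC: "bounded_clinear T \<Longrightarrow> bounded_clinear (\<lambda>x. c *\<^sub>C T x)"
proof -
  assume T: "bounded_clinear T"
  obtain L where L: "L > 0" "\<And>x. norm (T x) \<le> L * norm x" using bcl_bound[OF T] by blast
  have "norm (c *\<^sub>C T x) \<le> norm x * (cmod c * L)" for x
  proof -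
    have "cmod c * norm (T x) \<le> cmod c * (L * norm x)" using L(2)[of x] by (intro mult_left_mono) auto
    then show ?thesis by (simp add: norm_scaleC algebra_simps)
  qed
  moreover have "clin (\<lambda>x. c *\<^sub>C T x)" using T
    by (auto simp: clin_def bcl_def2 scaleC_add_right scaleC_scaleC mult.commute)
  ultimately show ?thesis unfolding bcl_def2 by blast
qed

lemma bcl_scaleR: "bounded_clinear T \<Longrightarrow> bounded_clinear (\<lambda>x. r *\<^sub>R T x)"
  using bcl_scaleC[of T "complex_of_real r"] by (simp add: scaleR_scaleC)

lemma bcl_minus: "bounded_clinear T \<Longrightarrow> bounded_clinear (\<lambda>x. - T x)"
  using bcl_scaleR[of T "-1"] by simp

lemma bcl_diff: "bounded_clinear S \<Longrightarrow> bounded_clinear T \<Longrightarrow> bounded_clinear (\<lambda>x. S x - T x)"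
  using bcl_add[of S "\<lambda>x. - T x"] bcl_minus[of T] by simp

lemma bcl_zero: "bounded_clinear (\<lambda>x. 0)"
  unfolding bcl_def2 clin_def by (auto intro!: exI[of _ 0])

lemma bcl_closed_kernel: "bounded_clinear T \<Longrightarrow> closed_csubspace {x. T x = 0}"
proof -
  assume T: "bounded_clinear T"
  have "{x. T x = 0} = T -` {0}" by auto
  then have "closed {x. T x = 0}" using continuous_closed_vimage[OF closed_singleton bcl_cont[OF T]] by simp
  then show ?thesis using bcl_clin[OF T] by (auto simp: closed_csubspace_def clin_add clin_scaleC clin_zero)
qed

lemma orth_csub: "closed_csubspace (orth M)"
proof -
  have "orth M = (\<Inter>x\<in>M. {y. cinner x y = 0})" by (auto simp: orth_def)
  then have "closed (orth M)" using closed_orth_single by auto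
  then show ?thesis by (auto simp: closed_csubspace_def orth_def cinner_add_right cinner_scaleC_right)
qed

lemma orth_mem: "y \<in> orth M \<longleftrightarrow> (\<forall>x\<in>M. cinner x y = 0)"
  by (simp add: orth_def)

lemma orth_inter: "x \<in> M \<Longrightarrow> x \<in> orth M \<Longrightarrow> x = 0"
  using cinner_self_eq_zero by (auto simp: orth_def)

context
  fixes M :: "'a::chilbert_space set"
  assumes M: "closed_csubspace M"
begin

lemma proj_id: "m \<in> M \<Longrightarrow> proj M m = m"
  by (rule proj_eqI[OF M]) auto

lemma proj_idem: "proj M (proj M x) = proj M x"
  using proj_id proj_in[OF M] by blast

lemma proj_resid_orth: "x - proj M x \<in> orth M"
  using proj_orth[OF M] by (simp add: orth_def)

lemma proj_add: "proj M (x + y) = proj M x + proj M y"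
proof (rule proj_eqI[OF M])
  show "proj M x + proj M y \<in> M" using csub_add[OF M] proj_in[OF M] by blast
  fix m assume m: "m \<in> M"
  have e: "x + y - (proj M x + proj M y) = (x - proj M x) + (y - proj M y)" by (simp add: algebra_simps)
  show "cinner m (x + y - (proj M x + proj M y)) = 0"
    unfolding e cinner_add_right using proj_orth[OF M m] by simp
qed

lemma proj_scaleC: "proj M (c *\<^sub>C x) = c *\<^sub>C proj M x"
proof (rule proj_eqI[OF M])
  show "c *\<^sub>C proj M x \<in> M" using csub_scaleC[OF M proj_in[OF M]] .
  fix m assume m: "m \<in> M"
  have "cinner m (c *\<^sub>C x - c *\<^sub>C proj M x) = c * cinner m (x - proj M x)"
    by (simp add: scaleC_diff_right[symmetric] cinner_scaleC_right)
  then show "cinner m (c *\<^sub>C x - c *\<^sub>C proj M x) = 0" using proj_orth[OF M m] by simp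
qed

lemma proj_clin: "clin (proj M)"
  by (simp add: clin_def proj_add proj_scaleC)

lemma proj_pyth: "(norm x)\<^sup>2 = (norm (proj M x))\<^sup>2 + (norm (x - proj M x))\<^sup>2"
proof -
  have "cinner (proj M x) (x - proj M x) = 0" using proj_orth[OF M proj_in[OF M]] .
  then have "(norm (proj M x + (x - proj M x)))\<^sup>2 = (norm (proj M x))\<^sup>2 + (norm (x - proj M x))\<^sup>2"
    by (rule pythagoras)
  then show ?thesis by simp
qed

lemma proj_norm: "norm (proj M x) \<le> norm x"
proof -
  have "(norm (proj M x))\<^sup>2 \<le> (norm x)\<^sup>2"
    using proj_pyth[of x] zero_le_power2[of "norm (x - proj M x)"] by linarith
  then show ?thesis by (rule power2_le_imp_le) simp
qed

lemma proj_resid_norm: "norm (x - proj M x) \<le> norm x"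
proof -
  have "(norm (x - proj M x))\<^sup>2 \<le> (norm x)\<^sup>2"
    using proj_pyth[of x] zero_le_power2[of "norm (proj M x)"] by linarith
  then show ?thesis by (rule power2_le_imp_le) simp
qed

lemma proj_bcl: "bounded_clinear (proj M)"
  unfolding bcl_def2 using proj_clin proj_norm by (auto intro!: exI[of _ 1])

lemma proj_sa: "cinner (proj M x) y = cinner x (proj M y)"
proof -
  have "cinner (proj M x) y = cinner (proj M x) (proj M y) + cinner (proj M x) (y - proj M y)"
    by (simp add: cinner_diff_right)
  also have "cinner (proj M x) (y - proj M y) = 0" using proj_orth[OF M proj_in[OF M]] .
  also have "cinner (proj M x) (proj M y) = cinner x (proj M y) - cinner (x - proj M x) (proj M y)"
    by (simp add: cinner_diff_left)
  also have "cinner (x - proj M x) (proj M y) = 0"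
    using proj_orth[OF M proj_in[OF M], of y x] cinner_eq_zero_sym by blast
  finally show ?thesis by simp
qed

lemma proj_fix_iff: "proj M x = x \<longleftrightarrow> x \<in> M"
proof
  assume "proj M x = x" then show "x \<in> M" using proj_in[OF M, of x] by (simp only:)
qed (rule proj_id)

lemma proj_zero_iff: "proj M x = 0 \<longleftrightarrow> x \<in> orth M"
proof
  assume "proj M x = 0" then show "x \<in> orth M" using proj_resid_orth[of x] by simp
next
  assume x: "x \<in> orth M"
  show "proj M x = 0" by (rule proj_eqI[OF M]) (use x csub_0[OF M] in \<open>auto simp: orth_def\<close>)
qed

lemma proj_orth_compl: "proj (orth M) x = x - proj M x"
proof (rule proj_eqI[OF orth_csub])
  show "x - proj M x \<in> orth M" by (rule proj_resid_orth)
  fix m assume "m \<in> orth M"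
  then have "cinner (proj M x) m = 0" using proj_in[OF M] by (auto simp: orth_def)
  then show "cinner m (x - (x - proj M x)) = 0" using cinner_eq_zero_sym by auto
qed

lemma orth_orth: "orth (orth M) = M"
proof
  show "M \<subseteq> orth (orth M)" by (auto simp: orth_def cinner_eq_zero_sym)
next
  show "orth (orth M) \<subseteq> M"
  proof
    fix x assume x: "x \<in> orth (orth M)"
    have "x - proj M x \<in> orth M" by (rule proj_resid_orth)
    then have "cinner (x - proj M x) x = 0" using x by (auto simp: orth_def)
    moreover have "cinner (x - proj M x) (proj M x) = 0"
      using proj_resid_orth[of x] proj_in[OF M] cinner_eq_zero_sym by (auto simp: orth_def)
    ultimately have "cinner (x - proj M x) (x - proj M x) = 0" by (simp add: cinner_diff_right)
    then have "x - proj M x = 0" using cinner_self_eq_zero by blast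
    then have "x = proj M x" by (rule right_minus_eq[THEN iffD1])
    then have "proj M x = x" by (rule sym)
    then show "x \<in> M" using proj_in[OF M, of x] by (simp only:)
  qed
qed

lemma proj_commute:
  assumes s: "clin s" and adj: "\<And>x y. cinner (s x) y = cinner x (s' y)"
    and sN: "\<And>x. x \<in> M \<Longrightarrow> s x \<in> M" and s'N: "\<And>x. x \<in> M \<Longrightarrow> s' x \<in> M"
  shows "proj M (s x) = s (proj M x)"
proof (rule proj_eqI[OF M])
  show "s (proj M x) \<in> M" using sN proj_in[OF M] by blast
  fix m assume m: "m \<in> M"
  have "cinner m (s x - s (proj M x)) = cinner m (s (x - proj M x))" by (simp add: clin_diff[OF s])
  also have "\<dots> = cnj (cinner (s (x - proj M x)) m)" by (simp add: cinner_conj_commute[of _ m])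
  also have "cinner (s (x - proj M x)) m = cinner (x - proj M x) (s' m)" by (rule adj)
  also have "\<dots> = 0" using proj_resid_orth[of x] s'N[OF m] by (auto simp: orth_def cinner_eq_zero_sym)
  finally show "cinner m (s x - s (proj M x)) = 0" by simp
qed

end


definition sa :: "('a::complex_inner \<Rightarrow> 'a) \<Rightarrow> bool" where
  "sa h \<longleftrightarrow> bounded_clinear h \<and> (\<forall>x y. cinner (h x) y = cinner x (h y))"

lemma sa_bcl: "sa h \<Longrightarrow> bounded_clinear h" by (simp add: sa_def)
lemma sa_adj: "sa h \<Longrightarrow> cinner (h x) y = cinner x (h y)" by (simp add: sa_def)

lemma sa_real: "sa h \<Longrightarrow> cinner x (h x) = complex_of_real (Re (cinner x (h x)))"
proof -
  assume h: "sa h"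
  have e: "cinner x (h x) = cnj (cinner x (h x))"
    using sa_adj[OF h, of x x] cinner_conj_commute[of "h x" x] by simp
  have "Im (cinner x (h x)) = Im (cnj (cinner x (h x)))" using e by (rule arg_cong)
  then have "Im (cinner x (h x)) = 0" by simp
  then show ?thesis by (simp add: complex_eq_iff)
qed

lemma proj_sa': "closed_csubspace (M::'a::chilbert_space set) \<Longrightarrow> sa (proj M)"
  by (simp add: sa_def proj_bcl proj_sa)

lemma proj_commute_sa:
  assumes M: "closed_csubspace (M::'a::chilbert_space set)" and h: "sa h" and hM: "\<And>x. x \<in> M \<Longrightarrow> h x \<in> M"
  shows "proj M (h x) = h (proj M x)"
  using proj_commute[OF M bcl_clin[OF sa_bcl[OF h]], of h] sa_adj[OF h] hM by blast

lemma sa_orth_inv: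
  assumes h: "sa h" and hM: "\<And>x. x \<in> M \<Longrightarrow> h x \<in> M" and y: "y \<in> orth M"
  shows "h y \<in> orth M"
proof -
  have "cinner x (h y) = 0" if x: "x \<in> M" for x
  proof -
    have "cinner x (h y) = cinner (h x) y" using sa_adj[OF h, of x y] by simp
    also have "\<dots> = 0" using y hM[OF x] by (simp add: orth_def)
    finally show ?thesis .
  qed
  then show ?thesis by (simp add: orth_def)
qed



section \<open>Riesz representation and adjoints\<close>

lemma riesz:
  fixes \<phi> :: "'a::chilbert_space \<Rightarrow> complex"
  assumes add: "\<And>x y. \<phi> (x + y) = \<phi> x + \<phi> y" and sc: "\<And>c x. \<phi> (c *\<^sub>C x) = c * \<phi> x"
    and bd: "\<And>x. cmod (\<phi> x) \<le> K * norm x"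
  shows "\<exists>z. \<forall>x. \<phi> x = cinner z x"
proof (cases "\<forall>x. \<phi> x = 0")
  case True then show ?thesis by (intro exI[of _ 0]) simp
next
  case False
  then obtain x0 where x0: "\<phi> x0 \<noteq> 0" by blast
  have sR: "\<phi> (r *\<^sub>R x) = r *\<^sub>R \<phi> x" for r x
    using sc[of "complex_of_real r" x] by (simp add: scaleR_scaleC scaleR_conv_of_real)
  have bl: "bounded_linear \<phi>"
    by (rule bounded_linear_intro[of \<phi> K]) (use add sR bd in \<open>auto simp: mult.commute\<close>)
  define N where "N = {x. \<phi> x = 0}"
  have "N = \<phi> -` {0}" by (auto simp: N_def)
  then have "closed N" using continuous_closed_vimage[OF closed_singleton linear_continuous_at[OF bl]] by simp
  moreover have "\<phi> 0 = 0" using sc[of 0 0] by simp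
  ultimately have N: "closed_csubspace N" by (auto simp: closed_csubspace_def N_def add sc)
  define w where "w = x0 - proj N x0"
  have wo: "w \<in> orth N" unfolding w_def by (rule proj_resid_orth[OF N])
  have "\<phi> (proj N x0) = 0" using proj_in[OF N, of x0] by (simp add: N_def)
  moreover have "\<phi> w = \<phi> x0 - \<phi> (proj N x0)" using add[of w "proj N x0"] by (simp add: w_def)
  ultimately have pw: "\<phi> w = \<phi> x0" by simp
  then have pw0: "\<phi> w \<noteq> 0" using x0 by simp
  have w0: "w \<noteq> 0" using pw0 sc[of 0 0] by auto
  define z where "z = (cnj (\<phi> w) / complex_of_real ((norm w)\<^sup>2)) *\<^sub>C w"
  have "\<phi> x = cinner z x" for x
  proof -
    define y where "y = x - (\<phi> x / \<phi> w) *\<^sub>C w"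
    have e1: "y + (\<phi> x / \<phi> w) *\<^sub>C w = x" by (simp add: y_def)
    have "\<phi> (y + (\<phi> x / \<phi> w) *\<^sub>C w) = \<phi> y + (\<phi> x / \<phi> w) * \<phi> w" using add sc by simp
    then have "\<phi> x = \<phi> y + \<phi> x" using e1 pw0 by simp
    then have "\<phi> y = 0" by simp
    then have "y \<in> N" by (simp add: N_def)
    then have "cinner y w = 0" using wo by (simp add: orth_def)
    then have "cinner w y = 0" using cinner_eq_zero_sym by blast
    then have "cinner w x = (\<phi> x / \<phi> w) * cinner w w"
      by (simp add: y_def cinner_diff_right cinner_scaleC_right)
    then have "cinner z x = \<phi> w / complex_of_real ((norm w)\<^sup>2) * ((\<phi> x / \<phi> w) * complex_of_real ((norm w)\<^sup>2))"
      by (simp add: z_def cinner_scaleC_left cinner_self_of_real)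
    also have "\<dots> = \<phi> x" using pw0 w0 by (simp add: field_simps)
    finally show ?thesis by simp
  qed
  then show ?thesis by blast
qed

lemma adjoint_exists:
  fixes T :: "'a::chilbert_space \<Rightarrow> 'a"
  assumes T: "bounded_clinear T"
  shows "\<exists>S. bounded_clinear S \<and> (\<forall>x y. cinner (T x) y = cinner x (S y))"
proof -
  obtain K where K: "K > 0" "\<And>x. norm (T x) \<le> K * norm x" using bcl_bound[OF T] by blast
  have Tl: "clin T" using bcl_clin[OF T] .
  have ex: "\<exists>z. \<forall>x. cinner (T x) y = cinner x z" for y
  proof -
    have "\<exists>z. \<forall>x. cinner y (T x) = cinner z x"
    proof (rule riesz[where K = "norm y * K"])
      show "cinner y (T (x1 + x2)) = cinner y (T x1) + cinner y (T x2)" for x1 x2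
        by (simp add: clin_add[OF Tl] cinner_add_right)
      show "cinner y (T (c *\<^sub>C x)) = c * cinner y (T x)" for c x
        by (simp add: clin_scaleC[OF Tl] cinner_scaleC_right)
      show "cmod (cinner y (T x)) \<le> norm y * K * norm x" for x
      proof -
        have "cmod (cinner y (T x)) \<le> norm y * norm (T x)" by (rule Cauchy_Schwarz)
        also have "\<dots> \<le> norm y * (K * norm x)" using K(2) by (intro mult_left_mono) auto
        finally show ?thesis by (simp add: mult.assoc)
      qed
    qed
    then obtain z where z: "\<And>x. cinner y (T x) = cinner z x" by blast
    have "cinner (T x) y = cinner x z" for x
    proof -
      have "cinner (T x) y = cnj (cinner y (T x))" by (rule cinner_conj_commute)
      also have "\<dots> = cnj (cinner z x)" by (simp only: z)
      also have "\<dots> = cinner x z" by (rule cinner_conj_commute[symmetric])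
      finally show ?thesis .
    qed
    then show ?thesis by blast
  qed
  define S where "S y = (SOME z. \<forall>x. cinner (T x) y = cinner x z)" for y
  have S: "cinner (T x) y = cinner x (S y)" for x y
    unfolding S_def using someI_ex[OF ex[of y]] by (rule spec)
  have Sadd: "S (y1 + y2) = S y1 + S y2" for y1 y2
    by (rule cinner_ext) (simp add: S[symmetric] cinner_add_right)
  have Ssc: "S (c *\<^sub>C y) = c *\<^sub>C S y" for c y
    by (rule cinner_ext) (simp add: S[symmetric] cinner_scaleC_right)
  have Sb: "norm (S y) \<le> norm y * K" for y
  proof -
    have "(norm (S y))\<^sup>2 = Re (cinner (S y) (S y))" by (rule norm_sq_cinner)
    also have "cinner (S y) (S y) = cinner (T (S y)) y" by (simp add: S)
    also have "Re (cinner (T (S y)) y) \<le> norm (T (S y)) * norm y" by (rule Re_cinner_le)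
    also have "\<dots> \<le> K * norm (S y) * norm y" using K(2) by (intro mult_right_mono) auto
    finally have h: "(norm (S y))\<^sup>2 \<le> K * norm (S y) * norm y" .
    show ?thesis
    proof (cases "S y = 0")
      case True then show ?thesis using K by simp
    next
      case False
      then have "norm (S y) > 0" by simp
      then show ?thesis using h by (simp add: power2_eq_square mult.assoc mult.commute mult_le_cancel_left_pos)
    qed
  qed
  have "bounded_clinear S" unfolding bcl_def2 clin_def using Sadd Ssc Sb by blast
  then show ?thesis using S by blast
qed

lemma adjoint_unique:
  assumes "\<And>x y. cinner (T x) y = cinner x (S1 y)" "\<And>x y. cinner (T x) y = cinner x (S2 y)"
  shows "S1 = S2"
proof
  fix y show "S1 y = S2 y" by (rule cinner_ext) (simp add: assms[symmetric])
qed



definition pos :: "('a::complex_inner \<Rightarrow> 'a) \<Rightarrow> bool" where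
  "pos a \<longleftrightarrow> sa a \<and> (\<forall>x. 0 \<le> Re (cinner x (a x)))"

lemma pos_sa: "pos a \<Longrightarrow> sa a" by (simp add: pos_def)
lemma pos_ge: "pos a \<Longrightarrow> 0 \<le> Re (cinner x (a x))" by (simp add: pos_def)

lemma sa_clin: "sa a \<Longrightarrow> clin a" using bcl_clin sa_bcl by blast

lemma sa_add: "sa a \<Longrightarrow> sa b \<Longrightarrow> sa (\<lambda>x. a x + b x)"
  by (simp add: sa_def bcl_add cinner_add_left cinner_add_right)

lemma sa_diff: "sa a \<Longrightarrow> sa b \<Longrightarrow> sa (\<lambda>x. a x - b x)"
  by (simp add: sa_def bcl_diff cinner_diff_left cinner_diff_right)

lemma sa_scaleR: "sa a \<Longrightarrow> sa (\<lambda>x. r *\<^sub>R a x)"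
  by (simp add: sa_def bcl_scaleR cinner_scaleR_left cinner_scaleR_right)

lemma sa_id: "sa (\<lambda>x. x)"
  by (simp add: sa_def bcl_id)

lemma sa_zero: "sa (\<lambda>x. 0)"
  by (simp add: sa_def bcl_zero)

lemma sa_const_diff: "sa a \<Longrightarrow> sa (\<lambda>x. a x - r *\<^sub>R x)"
  using sa_diff[OF _ sa_scaleR[OF sa_id]] by blast

lemma sa_comp_commute: "sa a \<Longrightarrow> sa b \<Longrightarrow> (\<And>x. a (b x) = b (a x)) \<Longrightarrow> sa (\<lambda>x. a (b x))"
  unfolding sa_def using bcl_comp by metis

lemma pos_add: "pos a \<Longrightarrow> pos b \<Longrightarrow> pos (\<lambda>x. a x + b x)"
  unfolding pos_def by (auto simp: sa_add cinner_add_right)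

lemma pos_scaleR: "pos a \<Longrightarrow> r \<ge> 0 \<Longrightarrow> pos (\<lambda>x. r *\<^sub>R a x)"
  unfolding pos_def by (auto simp: sa_scaleR cinner_scaleR_right)

lemma pos_zero: "pos (\<lambda>x. 0)"
  by (simp add: pos_def sa_zero)

lemma pos_id: "pos (\<lambda>x. x)"
  by (simp add: pos_def sa_id cinner_self_of_real)

lemma pos_sq: "sa a \<Longrightarrow> pos (\<lambda>x. a (a x))"
proof -
  assume a: "sa a"
  have "Re (cinner x (a (a x))) = (norm (a x))\<^sup>2" for x
    using sa_adj[OF a, of x "a x"] by (simp add: norm_sq_cinner)
  then show ?thesis using sa_comp_commute[OF a a] by (simp add: pos_def)
qed

lemma pos_sandwich: "sa a \<Longrightarrow> pos b \<Longrightarrow> sa (\<lambda>x. a (b (a x))) \<Longrightarrow> pos (\<lambda>x. a (b (a x)))"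
proof -
  assume a: "sa a" and b: "pos b" and s: "sa (\<lambda>x. a (b (a x)))"
  have "cinner x (a (b (a x))) = cinner (a x) (b (a x))" for x
    using sa_adj[OF a, of x "b (a x)"] by simp
  then show ?thesis using s pos_ge[OF b] by (simp add: pos_def)
qed

lemma pos_trans: "pos (\<lambda>x. b x - a x) \<Longrightarrow> pos (\<lambda>x. c x - b x) \<Longrightarrow> pos (\<lambda>x. c x - a x)"
proof -
  assume 1: "pos (\<lambda>x. b x - a x)" and 2: "pos (\<lambda>x. c x - b x)"
  have "pos (\<lambda>x. (b x - a x) + (c x - b x))" by (rule pos_add[OF 1 2])
  then show ?thesis by simp
qed

lemma quad_discr:
  fixes A B C :: real
  assumes C: "C \<ge> 0" and B: "B \<ge> 0" and q: "\<And>t. 0 \<le> A - 2 * t * B + t\<^sup>2 * C"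
  shows "B\<^sup>2 \<le> A * C"
proof (cases "C > 0")
  case True
  have "0 \<le> A - 2 * (B / C) * B + (B / C)\<^sup>2 * C" by (rule q)
  also have "\<dots> = A - B\<^sup>2 / C" using True by (simp add: power2_eq_square field_simps)
  finally show ?thesis using True by (simp add: field_simps)
next
  case False
  then have C0: "C = 0" using C by simp
  have "B = 0"
  proof (rule ccontr)
    assume "B \<noteq> 0"
    then have Bp: "B > 0" using B by simp
    have "0 \<le> A - 2 * ((\<bar>A\<bar> + 1) / (2 * B)) * B" using q[of "(\<bar>A\<bar> + 1) / (2 * B)"] C0 by simp
    also have "\<dots> = A - (\<bar>A\<bar> + 1)" using Bp by (simp add: field_simps)
    finally show False by linarith
  qed
  then show ?thesis using C0 by simp
qed

lemma gcs_restricted: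
  assumes k: "sa k" and R: "closed_csubspace R" and kR: "\<And>w. w \<in> R \<Longrightarrow> k w \<in> R"
    and posR: "\<And>w. w \<in> R \<Longrightarrow> 0 \<le> Re (cinner w (k w))" and y: "y \<in> R"
  shows "(norm (k y))^4 \<le> Re (cinner y (k y)) * Re (cinner (k y) (k (k y)))"
proof -
  define A where "A = Re (cinner y (k y))"
  define B where "B = (norm (k y))\<^sup>2"
  define C where "C = Re (cinner (k y) (k (k y)))"
  have kl: "clin k" by (rule sa_clin[OF k])
  have C0: "C \<ge> 0" unfolding C_def using posR kR y by blast
  have q: "0 \<le> A - 2 * t * B + t\<^sup>2 * C" for t
  proof -
    have w: "y - t *\<^sub>R k y \<in> R" using R y kR csub_diff csub_scaleR by blast
    have e: "k (y - t *\<^sub>R k y) = k y - t *\<^sub>R k (k y)" by (simp add: clin_diff[OF kl] clin_scaleR[OF kl])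
    have "cinner (y - t *\<^sub>R k y) (k (y - t *\<^sub>R k y)) =
        cinner y (k y) - complex_of_real t * cinner y (k (k y)) - complex_of_real t * cinner (k y) (k y)
        + complex_of_real t * complex_of_real t * cinner (k y) (k (k y))"
      unfolding e by (simp add: cinner_diff_left cinner_diff_right cinner_scaleR_left cinner_scaleR_right algebra_simps)
    also have "cinner y (k (k y)) = cinner (k y) (k y)" using sa_adj[OF k, of y "k y"] by simp
    finally have "Re (cinner (y - t *\<^sub>R k y) (k (y - t *\<^sub>R k y))) = A - 2 * t * B + t\<^sup>2 * C"
      by (simp add: A_def B_def C_def cinner_self_of_real power2_eq_square)
    then show ?thesis using posR[OF w] by simp
  qed
  have "B\<^sup>2 \<le> A * C" by (rule quad_discr[OF C0 _ q]) (simp add: B_def)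
  then show ?thesis by (simp add: A_def B_def C_def power_mult[symmetric])
qed

lemma norm_bound_restricted:
  assumes k: "sa k" and R: "closed_csubspace R" and kR: "\<And>w. w \<in> R \<Longrightarrow> k w \<in> R"
    and posR: "\<And>w. w \<in> R \<Longrightarrow> 0 \<le> Re (cinner w (k w))"
    and upR: "\<And>w. w \<in> R \<Longrightarrow> Re (cinner w (k w)) \<le> K * (norm w)\<^sup>2" and y: "y \<in> R"
  shows "norm (k y) \<le> K * norm y"
proof -
  have K0: "K \<ge> 0 \<or> y = 0"
  proof (cases "y = 0")
    case False
    have "0 \<le> K * (norm y)\<^sup>2" using posR[OF y] upR[OF y] by linarith
    then show ?thesis using False by (simp add: zero_le_mult_iff)
  qed simp
  have h: "(norm (k y))^4 \<le> Re (cinner y (k y)) * Re (cinner (k y) (k (k y)))"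
    by (rule gcs_restricted[OF k R kR posR y])
  also have "\<dots> \<le> (K * (norm y)\<^sup>2) * (K * (norm (k y))\<^sup>2)"
    using posR[OF y] posR[OF kR[OF y]] upR[OF y] upR[OF kR[OF y]] by (intro mult_mono) auto
  finally have h2: "(norm (k y))^4 \<le> (K * norm y)\<^sup>2 * (norm (k y))\<^sup>2"
    by (simp add: power2_eq_square algebra_simps)
  show ?thesis
  proof (cases "k y = 0")
    case True then show ?thesis using K0 by auto
  next
    case False
    define n where "n = (norm (k y))\<^sup>2"
    have n0: "n > 0" using False by (simp add: n_def)
    have "n * n = (norm (k y))^4" by (simp add: n_def power4_eq_xxxx power2_eq_square)
    also have "\<dots> \<le> (K * norm y)\<^sup>2 * (norm (k y))\<^sup>2" by (rule h2)
    also have "\<dots> = (K * norm y)\<^sup>2 * n" by (simp add: n_def)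
    finally have "n * n \<le> (K * norm y)\<^sup>2 * n" .
    then have "n \<le> (K * norm y)\<^sup>2" using n0 by (simp only: mult_le_cancel_right_pos)
    then have "(norm (k y))\<^sup>2 \<le> (K * norm y)\<^sup>2" unfolding n_def .
    moreover have "K * norm y \<ge> 0" using K0 False by (auto simp: clin_zero[OF sa_clin[OF k]])
    ultimately show ?thesis by (rule power2_le_imp_le)
  qed
qed

lemma csub_UNIV: "closed_csubspace UNIV"
  by (simp add: closed_csubspace_def)

lemma norm_bound_pos:
  assumes k: "pos k" and up: "\<And>w. Re (cinner w (k w)) \<le> K * (norm w)\<^sup>2"
  shows "norm (k y) \<le> K * norm y"
  by (rule norm_bound_restricted[OF pos_sa[OF k] csub_UNIV]) (use pos_ge[OF k] up in auto)

lemma pos_sq_bound: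
  assumes k: "pos k" and bd: "\<And>w. norm (k w) \<le> K * norm w"
  shows "(norm (k x))\<^sup>2 \<le> K * Re (cinner x (k x))"
proof -
  have h: "(norm (k x))^4 \<le> Re (cinner x (k x)) * Re (cinner (k x) (k (k x)))"
    by (rule gcs_restricted[OF pos_sa[OF k] csub_UNIV]) (use pos_ge[OF k] in auto)
  have "Re (cinner (k x) (k (k x))) \<le> norm (k x) * norm (k (k x))" by (rule Re_cinner_le)
  also have "\<dots> \<le> norm (k x) * (K * norm (k x))" by (intro mult_left_mono bd) auto
  finally have c: "Re (cinner (k x) (k (k x))) \<le> K * (norm (k x))\<^sup>2" by (simp add: power2_eq_square algebra_simps)
  have "(norm (k x))^4 \<le> Re (cinner x (k x)) * (K * (norm (k x))\<^sup>2)"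
    using h c pos_ge[OF k, of x] by (meson mult_left_mono order_trans)
  then have h2: "(norm (k x))\<^sup>2 * (norm (k x))\<^sup>2 \<le> (K * Re (cinner x (k x))) * (norm (k x))\<^sup>2"
    by (simp add: power_mult[symmetric] algebra_simps)
  show ?thesis
  proof (cases "k x = 0")
    case True
    have "K \<ge> 0 \<or> x = 0"
    proof (cases "x = 0")
      case False
      have "0 \<le> K * norm x" using bd[of x] norm_ge_zero[of "k x"] by linarith
      then show ?thesis using False by (simp add: zero_le_mult_iff)
    qed simp
    then show ?thesis using True pos_ge[OF k, of x] by auto
  next
    case False
    define n where "n = (norm (k x))\<^sup>2"
    have n0: "n > 0" using False by (simp add: n_def)
    have "n * n = (norm (k x))\<^sup>2 * (norm (k x))\<^sup>2" by (simp add: n_def)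
    also have "\<dots> \<le> (K * Re (cinner x (k x))) * (norm (k x))\<^sup>2" by (rule h2)
    also have "\<dots> = (K * Re (cinner x (k x))) * n" by (simp add: n_def)
    finally have "n * n \<le> (K * Re (cinner x (k x))) * n" .
    then have "n \<le> K * Re (cinner x (k x))" using n0 by (simp only: mult_le_cancel_right_pos)
    then show ?thesis unfolding n_def .
  qed
qed



section \<open>Monotone convergence of operators\<close>

lemma tendsto_cinner_left: "(f \<longlongrightarrow> l) F \<Longrightarrow> ((\<lambda>n. cinner (f n) y) \<longlongrightarrow> cinner l y) F"
proof -
  assume "(f \<longlongrightarrow> l) F"
  then have "((\<lambda>n. cnj (cinner y (f n))) \<longlongrightarrow> cnj (cinner y l)) F"
    by (intro tendsto_cnj tendsto_cinner_right)
  moreover have "\<And>n. cnj (cinner y (f n)) = cinner (f n) y" by (simp add: cinner_conj_commute[of "f _" y])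
  moreover have "cnj (cinner y l) = cinner l y" by (simp add: cinner_conj_commute[of l y])
  ultimately show ?thesis by simp
qed

lemma limit_clin:
  fixes z :: "nat \<Rightarrow> 'a::chilbert_space \<Rightarrow> 'a"
  assumes lin: "\<And>n. clin (z n)" and lim: "\<And>x. (\<lambda>n. z n x) \<longlonglongrightarrow> L x"
  shows "clin L"
proof -
  have "L (x + y) = L x + L y" for x y
  proof -
    have "(\<lambda>n. z n (x + y)) \<longlonglongrightarrow> L x + L y"
      using tendsto_add[OF lim[of x] lim[of y]] by (simp add: clin_add[OF lin])
    then show ?thesis using lim[of "x + y"] LIMSEQ_unique by blast
  qed
  moreover have "L (c *\<^sub>C x) = c *\<^sub>C L x" for c x
  proof -
    have "(\<lambda>n. c *\<^sub>C z n x) \<longlonglongrightarrow> c *\<^sub>C L x"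
      using bcl_tendsto[OF bcl_scaleC[OF bcl_id, of c] lim[of x]] by simp
    then have "(\<lambda>n. z n (c *\<^sub>C x)) \<longlonglongrightarrow> c *\<^sub>C L x" by (simp add: clin_scaleC[OF lin])
    then show ?thesis using lim[of "c *\<^sub>C x"] LIMSEQ_unique by blast
  qed
  ultimately show ?thesis by (simp add: clin_def)
qed

lemma limit_bound:
  fixes z :: "nat \<Rightarrow> 'a::chilbert_space \<Rightarrow> 'a"
  assumes bd: "\<And>n x. norm (z n x) \<le> B * norm x" and lim: "(\<lambda>n. z n x) \<longlonglongrightarrow> l"
  shows "norm l \<le> B * norm x"
proof -
  have "(\<lambda>n. norm (z n x)) \<longlonglongrightarrow> norm l" using lim by (rule tendsto_norm)
  then show ?thesis using bd by (intro LIMSEQ_le_const2) auto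
qed

lemma limit_sa:
  fixes z :: "nat \<Rightarrow> 'a::chilbert_space \<Rightarrow> 'a"
  assumes sa: "\<And>n. sa (z n)" and bd: "\<And>n x. norm (z n x) \<le> B * norm x"
    and lim: "\<And>x. (\<lambda>n. z n x) \<longlonglongrightarrow> L x"
  shows "sa L"
proof -
  have cl: "clin L" using limit_clin[OF sa_clin[OF sa] lim] .
  have "norm (L x) \<le> norm x * B" for x using limit_bound[OF bd lim[of x]] by (simp add: mult.commute)
  then have "bounded_clinear L" using cl by (auto simp: bcl_def2)
  moreover have "cinner (L x) y = cinner x (L y)" for x y
  proof -
    have "(\<lambda>n. cinner (z n x) y) \<longlonglongrightarrow> cinner (L x) y" by (rule tendsto_cinner_left[OF lim])
    moreover have "(\<lambda>n. cinner x (z n y)) \<longlonglongrightarrow> cinner x (L y)" by (rule tendsto_cinner_right[OF lim])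
    moreover have "\<And>n. cinner (z n x) y = cinner x (z n y)" using sa_adj[OF sa] by blast
    ultimately show ?thesis using LIMSEQ_unique by force
  qed
  ultimately show ?thesis by (simp add: sa_def)
qed

lemma pos_mono_chain:
  assumes inc: "\<And>n. pos (\<lambda>x. z (Suc n) x - z n x)" and nm: "n \<le> m"
  shows "pos (\<lambda>x. z m x - z n x)"
  using nm
proof (induction m rule: dec_induct)
  case base then show ?case by (simp add: pos_zero)
next
  case (step m)
  then show ?case using pos_trans[OF step.IH inc[of m]] by simp
qed

theorem monotone_conv:
  fixes z :: "nat \<Rightarrow> 'a::chilbert_space \<Rightarrow> 'a"
  assumes sa: "\<And>n. sa (z n)" and bd: "\<And>n x. norm (z n x) \<le> B * norm x" and B0: "B \<ge> 0"
    and inc: "\<And>n. pos (\<lambda>x. z (Suc n) x - z n x)"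
  shows "\<exists>L. sa L \<and> (\<forall>x. (\<lambda>n. z n x) \<longlonglongrightarrow> L x) \<and> (\<forall>x. norm (L x) \<le> B * norm x)
             \<and> (\<forall>n. pos (\<lambda>x. L x - z n x))"
proof -
  have mono: "pos (\<lambda>x. z m x - z n x)" if "n \<le> m" for n m using pos_mono_chain[of z, OF inc that] .
  have conv: "(\<lambda>n. z n x) \<longlonglongrightarrow> (lim (\<lambda>n. z n x))" for x
  proof -
    define r where "r n = Re (cinner x (z n x))" for n
    have rinc: "incseq r"
    proof (rule incseq_SucI)
      fix n
      have "0 \<le> Re (cinner x (z (Suc n) x - z n x))" using pos_ge[OF inc[of n]] by simp
      then show "r n \<le> r (Suc n)" by (simp add: r_def cinner_diff_right)
    qed
    have rb: "r n \<le> B * (norm x)\<^sup>2" for n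
    proof -
      have "r n \<le> norm x * norm (z n x)" unfolding r_def by (rule Re_cinner_le)
      also have "\<dots> \<le> norm x * (B * norm x)" by (intro mult_left_mono bd) auto
      finally show ?thesis by (simp add: power2_eq_square algebra_simps)
    qed
    obtain R where R: "r \<longlonglongrightarrow> R" using incseq_convergent[OF rinc, of "B * (norm x)\<^sup>2"] rb by blast
    then have rC: "Cauchy r" using LIMSEQ_imp_Cauchy by blast
    have key: "(norm (z m x - z n x))\<^sup>2 \<le> (2 * B) * (r m - r n)" if "n \<le> m" for n m
    proof -
      have p: "pos (\<lambda>x. z m x - z n x)" using mono[OF that] .
      have "norm (z m w - z n w) \<le> (2 * B) * norm w" for w
      proof -
        have "norm (z m w - z n w) \<le> norm (z m w) + norm (z n w)" by (rule norm_triangle_ineq4)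
        also have "\<dots> \<le> B * norm w + B * norm w" using bd by (intro add_mono) auto
        finally show ?thesis by simp
      qed
      from pos_sq_bound[OF p this]
      show ?thesis by (simp add: r_def cinner_diff_right)
    qed
    have "Cauchy (\<lambda>n. z n x)"
    proof (rule metric_CauchyI)
      fix e :: real assume e: "e > 0"
      have "e\<^sup>2 / (2 * B + 1) > 0" using e B0 by simp
      then obtain N where N: "\<forall>m\<ge>N. \<forall>n\<ge>N. dist (r m) (r n) < e\<^sup>2 / (2 * B + 1)"
        using rC unfolding Cauchy_def by blast
      have "dist (z m x) (z n x) < e" if mn: "m \<ge> N" "n \<ge> N" for m n
      proof -
        have gen: "norm (z a x - z b x) < e" if ab: "b \<le> a" "a \<ge> N" "b \<ge> N" for a b
        proof -
          have "(norm (z a x - z b x))\<^sup>2 \<le> (2 * B) * (r a - r b)" by (rule key[OF ab(1)])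
          also have "\<dots> \<le> (2 * B + 1) * (r a - r b)"
            using incseqD[OF rinc ab(1)] by (intro mult_right_mono) auto
          also have "\<dots> < (2 * B + 1) * (e\<^sup>2 / (2 * B + 1))"
          proof (rule mult_strict_left_mono)
            have "dist (r a) (r b) < e\<^sup>2 / (2 * B + 1)" using N ab(2,3) by blast
            then show "r a - r b < e\<^sup>2 / (2 * B + 1)" by (simp add: dist_real_def)
          qed (use B0 in simp)
          also have "\<dots> = e\<^sup>2" using B0 by simp
          finally have "(norm (z a x - z b x))\<^sup>2 < e\<^sup>2" .
          then show ?thesis using e by (simp add: power_less_imp_less_base)
        qed
        show ?thesis
        proof (cases "n \<le> m")
          case True then show ?thesis using gen[OF True mn] by (simp add: dist_norm)
        next
          case False then have "m \<le> n" by simp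
          then show ?thesis using gen[OF _ mn(2) mn(1)] by (simp add: dist_norm norm_minus_commute)
        qed
      qed
      then show "\<exists>N. \<forall>m\<ge>N. \<forall>n\<ge>N. dist (z m x) (z n x) < e" by blast
    qed
    then show ?thesis using Cauchy_convergent_iff convergent_LIMSEQ_iff by blast
  qed
  define L where "L x = lim (\<lambda>n. z n x)" for x
  have lim: "(\<lambda>n. z n x) \<longlonglongrightarrow> L x" for x unfolding L_def by (rule conv)
  have saL: "sa L" by (rule limit_sa[OF sa bd lim])
  have bL: "norm (L x) \<le> B * norm x" for x by (rule limit_bound[OF bd lim])
  have pL: "pos (\<lambda>x. L x - z n x)" for n
  proof -
    have "0 \<le> Re (cinner x (L x - z n x))" for x
    proof -
      have "(\<lambda>m. Re (cinner x (z m x - z n x))) \<longlonglongrightarrow> Re (cinner x (L x - z n x))"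
        by (intro tendsto_Re tendsto_cinner_right tendsto_diff lim tendsto_const)
      moreover have "\<forall>m\<ge>n. 0 \<le> Re (cinner x (z m x - z n x))" using mono pos_ge by blast
      ultimately show ?thesis by (intro LIMSEQ_le_const) auto
    qed
    moreover have "sa (\<lambda>x. L x - z n x)" using sa_diff[OF saL sa] .
    ultimately show ?thesis by (simp add: pos_def)
  qed
  show ?thesis using saL lim bL pL by blast
qed



inductive_set NP :: "('a::complex_inner \<Rightarrow> 'a) \<Rightarrow> ('a \<Rightarrow> 'a) set" for c where
  NP0: "(\<lambda>x. 0) \<in> NP c"
| NPs: "p \<in> NP c \<Longrightarrow> r \<ge> 0 \<Longrightarrow> (\<lambda>x. p x + r *\<^sub>R (c ^^ k) x) \<in> NP c"

lemma funpow_clin: "clin (c::'a::complex_vector \<Rightarrow> 'a) \<Longrightarrow> clin (c ^^ k)"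
  by (induction k) (auto simp: clin_def)

lemma funpow_bcl: "bounded_clinear (c::'a::complex_normed_vector \<Rightarrow> 'a) \<Longrightarrow> bounded_clinear (c ^^ k)"
proof (induction k)
  case 0 then show ?case using bcl_id by (simp add: id_def)
next
  case (Suc k) then show ?case using bcl_comp[of c "c ^^ k"] by (simp add: comp_def)
qed

lemma funpow_sa: "sa c \<Longrightarrow> sa (c ^^ k)"
proof (induction k)
  case 0 then show ?case using sa_id by (simp add: id_def)
next
  case (Suc k)
  have "sa (\<lambda>x. c ((c ^^ k) x))"
    by (rule sa_comp_commute[OF Suc.prems Suc.IH[OF Suc.prems]]) (simp add: funpow_swap1)
  then show ?case by (simp add: comp_def)
qed

lemma funpow_pos: "pos c \<Longrightarrow> pos (c ^^ k)"
proof -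
  assume c: "pos c"
  have sc: "sa c" using pos_sa[OF c] .
  have "0 \<le> Re (cinner x ((c ^^ k) x))" for x
  proof (cases "even k")
    case True
    then obtain j where k: "k = j + j" by (metis evenE mult_2)
    have "(c ^^ k) x = (c ^^ j) ((c ^^ j) x)" by (simp add: k funpow_add)
    then have "cinner x ((c ^^ k) x) = cinner ((c ^^ j) x) ((c ^^ j) x)"
      using sa_adj[OF funpow_sa[OF sc], of j x "(c ^^ j) x"] by simp
    then show ?thesis by (simp add: cinner_self_of_real)
  next
    case False
    then obtain j where k: "k = j + (1 + j)" by (metis oddE add.commute add.left_commute mult_2)
    have "(c ^^ k) x = (c ^^ j) (c ((c ^^ j) x))" by (simp add: k funpow_add funpow_swap1)
    then have "cinner x ((c ^^ k) x) = cinner ((c ^^ j) x) (c ((c ^^ j) x))"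
      using sa_adj[OF funpow_sa[OF sc], of j x "c ((c ^^ j) x)"] by simp
    then show ?thesis using pos_ge[OF c] by simp
  qed
  then show ?thesis using funpow_sa[OF sc] by (simp add: pos_def)
qed

context
  fixes c :: "'a::chilbert_space \<Rightarrow> 'a"
  assumes cpos: "pos c"
begin

lemma c_sa: "sa c" using pos_sa[OF cpos] .
lemma c_clin: "clin c" using sa_clin[OF c_sa] .

lemma NP_pos: "p \<in> NP c \<Longrightarrow> pos p"
proof (induction rule: NP.induct)
  case NP0 then show ?case by (rule pos_zero)
next
  case (NPs p r k)
  then show ?case using pos_add[OF NPs.IH pos_scaleR[OF funpow_pos[OF cpos] NPs.hyps(2)]] by simp
qed

lemma NP_add: "q \<in> NP c \<Longrightarrow> p \<in> NP c \<Longrightarrow> (\<lambda>x. p x + q x) \<in> NP c"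
proof (induction rule: NP.induct)
  case NP0 then show ?case by simp
next
  case (NPs q r k)
  have "(\<lambda>x. (p x + q x) + r *\<^sub>R (c ^^ k) x) \<in> NP c" using NP.NPs[OF NPs.IH[OF NPs.prems] NPs.hyps(2)] .
  then show ?case by (simp add: add.assoc)
qed

lemma NP_scale: "p \<in> NP c \<Longrightarrow> s \<ge> 0 \<Longrightarrow> (\<lambda>x. s *\<^sub>R p x) \<in> NP c"
proof (induction rule: NP.induct)
  case NP0 then show ?case using NP.NP0 by simp
next
  case (NPs p r k)
  have "(\<lambda>x. s *\<^sub>R p x + (s * r) *\<^sub>R (c ^^ k) x) \<in> NP c"
    using NP.NPs[OF NPs.IH[OF NPs.prems]] NPs.hyps(2) NPs.prems by simp
  then show ?case by (simp add: scaleR_add_right)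
qed

lemma NP_mono: "r \<ge> 0 \<Longrightarrow> (\<lambda>x. r *\<^sub>R (c ^^ k) x) \<in> NP c"
  using NP.NPs[OF NP.NP0, of r k] by simp

lemma NP_c: "c \<in> NP c"
  using NP_mono[of 1 1] by simp

lemma NP_lin: "p \<in> NP c \<Longrightarrow> clin p"
  using NP_pos pos_sa sa_clin by blast

lemma NP_pow_comp: "q \<in> NP c \<Longrightarrow> (\<lambda>x. (c ^^ k) (q x)) \<in> NP c"
proof (induction rule: NP.induct)
  case NP0 then show ?case using clin_zero[OF funpow_clin[OF c_clin]] NP.NP0 by simp
next
  case (NPs q r j)
  have "(\<lambda>x. (c ^^ k) (q x) + (r *\<^sub>R (c ^^ (k + j)) x)) \<in> NP c"
    using NP_add[OF NP_mono[OF NPs.hyps(2)] NPs.IH] by simp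
  then show ?case using funpow_clin[OF c_clin, of k]
    by (simp add: clin_add clin_scaleR funpow_add)
qed

lemma NP_comp: "p \<in> NP c \<Longrightarrow> q \<in> NP c \<Longrightarrow> (\<lambda>x. p (q x)) \<in> NP c"
proof (induction rule: NP.induct)
  case NP0 show ?case by (rule NP.NP0)
next
  case (NPs p r k)
  have "(\<lambda>x. r *\<^sub>R (c ^^ k) (q x)) \<in> NP c" using NP_scale[OF NP_pow_comp[OF NPs.prems] NPs.hyps(2)] .
  from NP_add[OF this NPs.IH[OF NPs.prems]] show ?case by simp
qed

lemma funpow_commute: "clin s \<Longrightarrow> (\<And>x. s (c x) = c (s x)) \<Longrightarrow> s ((c ^^ k) x) = (c ^^ k) (s x)"
  by (induction k arbitrary: x) auto

lemma NP_commute: "p \<in> NP c \<Longrightarrow> clin s \<Longrightarrow> (\<And>x. s (c x) = c (s x)) \<Longrightarrow> s (p x) = p (s x)"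
proof (induction arbitrary: x rule: NP.induct)
  case NP0 then show ?case by (simp add: clin_zero)
next
  case (NPs p r k)
  then show ?case by (simp add: clin_add clin_scaleR funpow_commute)
qed

lemma NP_commute2: "p \<in> NP c \<Longrightarrow> q \<in> NP c \<Longrightarrow> p (q x) = q (p x)"
proof -
  assume p: "p \<in> NP c" and q: "q \<in> NP c"
  have "q (c x) = c (q x)" for x using NP_commute[OF q c_clin] by simp
  then show ?thesis using NP_commute[OF p NP_lin[OF q]] by simp
qed

end



section \<open>Square roots\<close>

primrec zs :: "('a::complex_vector \<Rightarrow> 'a) \<Rightarrow> nat \<Rightarrow> 'a \<Rightarrow> 'a" where
  "zs c 0 = (\<lambda>x. 0)"
| "zs c (Suc n) = (\<lambda>x. (1/2) *\<^sub>R (c x + zs c n (zs c n x)))"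

lemma zs_NP: "pos (c::'a::chilbert_space \<Rightarrow> 'a) \<Longrightarrow> zs c n \<in> NP c"
proof (induction n)
  case 0 then show ?case using NP.NP0 by simp
next
  case (Suc n)
  have "(\<lambda>x. c x + zs c n (zs c n x)) \<in> NP c"
    using NP_add[OF Suc.prems NP_comp[OF Suc.prems Suc.IH[OF Suc.prems] Suc.IH[OF Suc.prems]] NP_c[OF Suc.prems]] .
  from NP_scale[OF Suc.prems this, of "1/2"] show ?case by simp
qed

lemma zs_bound:
  assumes cb: "\<And>x. norm (c x) \<le> norm x" and lin: "\<And>n. clin (zs c n)"
  shows "norm (zs c n x) \<le> norm (x::'a::complex_normed_vector)"
proof (induction n arbitrary: x)
  case 0 then show ?case by simp
next
  case (Suc n)
  have "norm (c x + zs c n (zs c n x)) \<le> norm (c x) + norm (zs c n (zs c n x))" by (rule norm_triangle_ineq)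
  also have "\<dots> \<le> norm x + norm x" using cb[of x] Suc.IH[of "zs c n x"] Suc.IH[of x] by linarith
  finally show ?case by simp
qed

lemma zs_diff_NP:
  assumes c: "pos (c::'a::chilbert_space \<Rightarrow> 'a)"
  shows "(\<lambda>x. zs c (Suc n) x - zs c n x) \<in> NP c"
proof (induction n)
  case 0 then show ?case using NP_scale[OF c NP_c[OF c], of "1/2"] by simp
next
  case (Suc n)
  define D where "D = (\<lambda>x. zs c (Suc n) x - zs c n x)"
  have DNP: "D \<in> NP c" using Suc.IH by (simp add: D_def)
  have z1: "zs c (Suc n) \<in> NP c" and z0: "zs c n \<in> NP c" using zs_NP[OF c] by blast+
  have Dl: "clin D" using NP_lin[OF c DNP] .
  have l1: "clin (zs c (Suc n))" and l0: "clin (zs c n)" using NP_lin[OF c] z1 z0 by blast+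
  have com: "zs c (Suc n) (zs c n x) = zs c n (zs c (Suc n) x)" for x using NP_commute2[OF c z1 z0] .
  have eq: "zs c (Suc (Suc n)) x - zs c (Suc n) x = (1/2) *\<^sub>R D (zs c (Suc n) x + zs c n x)" for x
  proof -
    have "D (zs c (Suc n) x + zs c n x) = zs c (Suc n) (zs c (Suc n) x) - zs c n (zs c n x)"
      by (simp del: zs.simps add: D_def clin_add[OF l1] clin_add[OF l0] com algebra_simps)
    moreover have "zs c (Suc (Suc n)) x - zs c (Suc n) x
        = (1/2) *\<^sub>R (zs c (Suc n) (zs c (Suc n) x) - zs c n (zs c n x))"
      by (simp only: zs.simps) (simp add: scaleR_diff_right[symmetric])
    ultimately show ?thesis by simp
  qed
  have "(\<lambda>x. D (zs c (Suc n) x + zs c n x)) \<in> NP c"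
    using NP_comp[OF c DNP NP_add[OF c z0 z1]] .
  from NP_scale[OF c this, of "1/2"] show ?case using eq by simp
qed

lemma sqrt_exists1:
  fixes a :: "'a::chilbert_space \<Rightarrow> 'a"
  assumes a: "pos a" and ab: "\<And>x. norm (a x) \<le> norm x"
  shows "\<exists>r. pos r \<and> (\<forall>x. r (r x) = a x) \<and>
    (\<forall>s. bounded_clinear s \<and> (\<forall>x. s (a x) = a (s x)) \<longrightarrow> (\<forall>x. s (r x) = r (s x)))"
proof -
  define c where "c = (\<lambda>x. x - a x)"
  have sac: "sa c" unfolding c_def using sa_diff[OF sa_id pos_sa[OF a]] .
  have "Re (cinner x (c x)) \<ge> 0" for x
  proof -
    have "Re (cinner x (a x)) \<le> norm x * norm (a x)" by (rule Re_cinner_le)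
    also have "\<dots> \<le> norm x * norm x" using ab by (intro mult_left_mono) auto
    finally show ?thesis by (simp add: c_def cinner_diff_right cinner_self_of_real power2_eq_square)
  qed
  then have c: "pos c" using sac by (simp add: pos_def)
  have cb: "norm (c x) \<le> norm x" for x
  proof -
    have "norm (c x) \<le> 1 * norm x"
    proof (rule norm_bound_pos[OF c])
      fix w
      have "Re (cinner w (c w)) = (norm w)\<^sup>2 - Re (cinner w (a w))"
        by (simp add: c_def cinner_diff_right cinner_self_of_real)
      then show "Re (cinner w (c w)) \<le> 1 * (norm w)\<^sup>2" using pos_ge[OF a, of w] by simp
    qed
    then show ?thesis by simp
  qed
  have zNP: "zs c n \<in> NP c" for n using zs_NP[OF c] .
  have zlin: "clin (zs c n)" for n using NP_lin[OF c zNP] .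
  have zsa: "sa (zs c n)" for n using NP_pos[OF c zNP] pos_sa by blast
  have zb: "norm (zs c n x) \<le> 1 * norm x" for n x using zs_bound[OF cb zlin] by simp
  have zinc: "pos (\<lambda>x. zs c (Suc n) x - zs c n x)" for n using NP_pos[OF c zs_diff_NP[OF c]] .
  obtain L where L: "sa L" "\<And>x. (\<lambda>n. zs c n x) \<longlonglongrightarrow> L x" "\<And>x. norm (L x) \<le> 1 * norm x"
      "\<And>n. pos (\<lambda>x. L x - zs c n x)"
    using monotone_conv[of "zs c" 1, OF zsa zb _ zinc] by auto
  have Ll: "clin L" using sa_clin[OF L(1)] .
  have Lpos: "pos L" using L(4)[of 0] by simp
  have fixp: "L x = (1/2) *\<^sub>R (c x + L (L x))" for x
  proof -
    have t1: "(\<lambda>n. zs c n (L x)) \<longlonglongrightarrow> L (L x)" by (rule L(2))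
    have t2: "(\<lambda>n. zs c n (zs c n x) - zs c n (L x)) \<longlonglongrightarrow> 0"
    proof (rule tendsto_norm_zero_cancel, rule Lim_null_comparison)
      show "\<forall>\<^sub>F n in sequentially. norm (norm (zs c n (zs c n x) - zs c n (L x))) \<le> norm (zs c n x - L x)"
      proof (rule always_eventually, rule allI)
        fix n
        have "norm (zs c n (zs c n x - L x)) \<le> norm (zs c n x - L x)" using zb by simp
        then show "norm (norm (zs c n (zs c n x) - zs c n (L x))) \<le> norm (zs c n x - L x)"
          by (simp add: clin_diff[OF zlin])
      qed
      show "(\<lambda>n. norm (zs c n x - L x)) \<longlonglongrightarrow> 0"
        using L(2)[of x] by (intro tendsto_norm_zero) (simp add: LIM_zero)
    qed
    have "(\<lambda>n. zs c n (zs c n x)) \<longlonglongrightarrow> L (L x)"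
      using tendsto_add[OF t2 t1] by simp
    then have "(\<lambda>n. (1/2) *\<^sub>R (c x + zs c n (zs c n x))) \<longlonglongrightarrow> (1/2) *\<^sub>R (c x + L (L x))"
      by (intro tendsto_intros)
    then have "(\<lambda>n. zs c (Suc n) x) \<longlonglongrightarrow> (1/2) *\<^sub>R (c x + L (L x))" by simp
    moreover have "(\<lambda>n. zs c (Suc n) x) \<longlonglongrightarrow> L x" using L(2)[of x] by (rule LIMSEQ_Suc)
    ultimately show ?thesis using LIMSEQ_unique by blast
  qed
  define r where "r = (\<lambda>x. x - L x)"
  have rsa: "sa r" unfolding r_def using sa_diff[OF sa_id L(1)] .
  have "Re (cinner x (r x)) \<ge> 0" for x
  proof -
    have "Re (cinner x (L x)) \<le> norm x * norm (L x)" by (rule Re_cinner_le)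
    also have "\<dots> \<le> norm x * norm x" using L(3) by (intro mult_left_mono) auto
    finally show ?thesis by (simp add: r_def cinner_diff_right cinner_self_of_real power2_eq_square)
  qed
  then have rpos: "pos r" using rsa by (simp add: pos_def)
  have rr: "r (r x) = a x" for x
  proof -
    have "2 *\<^sub>R L x = 2 *\<^sub>R ((1/2) *\<^sub>R (c x + L (L x)))" using fixp[of x] by (rule arg_cong)
    then have "2 *\<^sub>R L x = c x + L (L x)" by (simp only: scaleR_scaleR) simp
    then have "L (L x) = 2 *\<^sub>R L x - c x" by (simp add: algebra_simps)
    then have "r (r x) = x - c x" by (simp add: r_def clin_diff[OF Ll] algebra_simps scaleR_2)
    then show ?thesis by (simp add: c_def)
  qed
  have com: "s (r x) = r (s x)" if s: "bounded_clinear s" "\<forall>x. s (a x) = a (s x)" for s x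
  proof -
    have sl: "clin s" using bcl_clin[OF s(1)] .
    have sc: "s (c y) = c (s y)" for y using s(2) by (simp add: c_def clin_diff[OF sl])
    have zc: "s (zs c n y) = zs c n (s y)" for n y using NP_commute[OF c zNP sl sc] .
    have "(\<lambda>n. s (zs c n x)) \<longlonglongrightarrow> s (L x)" by (rule bcl_tendsto[OF s(1) L(2)])
    then have "(\<lambda>n. zs c n (s x)) \<longlonglongrightarrow> s (L x)" by (simp add: zc)
    then have "s (L x) = L (s x)" using L(2)[of "s x"] LIMSEQ_unique by blast
    then show ?thesis by (simp add: r_def clin_diff[OF sl])
  qed
  show ?thesis using rpos rr com by blast
qed



section \<open>General square roots, absolute value, spectral subspaces\<close>

lemma sqrt_exists:
  fixes a :: "'a::chilbert_space \<Rightarrow> 'a"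
  assumes a: "pos a"
  shows "\<exists>r. pos r \<and> (\<forall>x. r (r x) = a x) \<and>
    (\<forall>s. bounded_clinear s \<and> (\<forall>x. s (a x) = a (s x)) \<longrightarrow> (\<forall>x. s (r x) = r (s x)))"
proof -
  obtain K where K: "K > 0" "\<And>x. norm (a x) \<le> K * norm x" using bcl_bound[OF sa_bcl[OF pos_sa[OF a]]] by blast
  define a' where "a' = (\<lambda>x. (1/K) *\<^sub>R a x)"
  have a': "pos a'" unfolding a'_def using pos_scaleR[OF a, of "1/K"] K by simp
  have a'b: "norm (a' x) \<le> norm x" for x
  proof -
    have "norm (a' x) = (1/K) * norm (a x)" using K by (simp add: a'_def)
    also have "\<dots> \<le> (1/K) * (K * norm x)" using K K(2)[of x] by (intro mult_left_mono) auto
    also have "\<dots> = norm x" using K by simp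
    finally show ?thesis .
  qed
  obtain r' where r': "pos r'" "\<And>x. r' (r' x) = a' x"
    "\<And>s. bounded_clinear s \<Longrightarrow> (\<forall>x. s (a' x) = a' (s x)) \<Longrightarrow> (\<forall>x. s (r' x) = r' (s x))"
    using sqrt_exists1[OF a' a'b] by blast
  define r where "r = (\<lambda>x. sqrt K *\<^sub>R r' x)"
  have rpos: "pos r" unfolding r_def using pos_scaleR[OF r'(1), of "sqrt K"] K by simp
  have r'l: "clin r'" using sa_clin[OF pos_sa[OF r'(1)]] .
  have rr: "r (r x) = a x" for x
  proof -
    have "r (r x) = (sqrt K * sqrt K) *\<^sub>R r' (r' x)" by (simp add: r_def clin_scaleR[OF r'l])
    also have "\<dots> = K *\<^sub>R a' x" using K by (simp add: r'(2))
    also have "\<dots> = a x" using K by (simp add: a'_def)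
    finally show ?thesis .
  qed
  have com: "\<forall>x. s (r x) = r (s x)" if s: "bounded_clinear s" "\<forall>x. s (a x) = a (s x)" for s
  proof -
    have sl: "clin s" using bcl_clin[OF s(1)] .
    have "\<forall>x. s (a' x) = a' (s x)" using s(2) by (simp add: a'_def clin_scaleR[OF sl])
    then have "\<forall>x. s (r' x) = r' (s x)" using r'(3)[OF s(1)] by blast
    then show ?thesis by (simp add: r_def clin_scaleR[OF sl])
  qed
  show ?thesis using rpos rr com by blast
qed

definition sabs :: "('a::chilbert_space \<Rightarrow> 'a) \<Rightarrow> ('a \<Rightarrow> 'a)" where
  "sabs b = (SOME r. pos r \<and> (\<forall>x. r (r x) = b (b x)) \<and>
    (\<forall>s. bounded_clinear s \<and> (\<forall>x. s (b (b x)) = b (b (s x))) \<longrightarrow> (\<forall>x. s (r x) = r (s x))))"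

lemma sabs_props:
  assumes b: "sa b"
  shows "pos (sabs b)" "\<And>x. sabs b (sabs b x) = b (b x)"
    "\<And>s x. bounded_clinear s \<Longrightarrow> (\<And>x. s (b x) = b (s x)) \<Longrightarrow> s (sabs b x) = sabs b (s x)"
proof -
  have ex: "\<exists>r. pos r \<and> (\<forall>x. r (r x) = b (b x)) \<and>
    (\<forall>s. bounded_clinear s \<and> (\<forall>x. s (b (b x)) = b (b (s x))) \<longrightarrow> (\<forall>x. s (r x) = r (s x)))"
    using sqrt_exists[OF pos_sq[OF b]] by simp
  have P: "pos (sabs b) \<and> (\<forall>x. sabs b (sabs b x) = b (b x)) \<and>
    (\<forall>s. bounded_clinear s \<and> (\<forall>x. s (b (b x)) = b (b (s x))) \<longrightarrow> (\<forall>x. s (sabs b x) = sabs b (s x)))"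
    unfolding sabs_def by (rule someI_ex[OF ex])
  show "pos (sabs b)" "\<And>x. sabs b (sabs b x) = b (b x)" using P by blast+
  fix s x assume s: "bounded_clinear s" and sb: "\<And>x. s (b x) = b (s x)"
  have "\<forall>x. s (b (b x)) = b (b (s x))" using sb by simp
  then show "s (sabs b x) = sabs b (s x)" using P s by blast
qed

definition shift :: "('a::complex_vector \<Rightarrow> 'a) \<Rightarrow> real \<Rightarrow> 'a \<Rightarrow> 'a" where
  "shift h t = (\<lambda>x. h x - t *\<^sub>R x)"

definition specsp :: "('a::chilbert_space \<Rightarrow> 'a) \<Rightarrow> real \<Rightarrow> 'a set" where
  "specsp h t = {x. sabs (shift h t) x + shift h t x = 0}"

context
  fixes h :: "'a::chilbert_space \<Rightarrow> 'a" and t :: real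
  assumes h: "sa h"
begin

lemma shift_sa: "sa (shift h t)"
  unfolding shift_def by (rule sa_const_diff[OF h])

lemma spec_csub: "closed_csubspace (specsp h t)"
proof -
  have "bounded_clinear (\<lambda>x. sabs (shift h t) x + shift h t x)"
    using bcl_add[OF sa_bcl[OF pos_sa[OF sabs_props(1)[OF shift_sa]]] sa_bcl[OF shift_sa]] .
  from bcl_closed_kernel[OF this] show ?thesis by (simp add: specsp_def)
qed

lemma spec_le:
  assumes y: "y \<in> specsp h t"
  shows "Re (cinner y (h y)) \<le> t * (norm y)\<^sup>2"
proof -
  let ?b = "shift h t" and ?r = "sabs (shift h t)"
  have "?b y = - ?r y" using y by (simp add: specsp_def eq_neg_iff_add_eq_0 add.commute)
  then have "Re (cinner y (?b y)) = - Re (cinner y (?r y))" by (simp add: cinner_minus_right)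
  also have "\<dots> \<le> 0" using pos_ge[OF sabs_props(1)[OF shift_sa]] by simp
  finally show ?thesis
    by (simp add: shift_def cinner_diff_right cinner_scaleR_right cinner_self_of_real)
qed

lemma spec_ge:
  assumes y: "y \<in> orth (specsp h t)"
  shows "Re (cinner y (h y)) \<ge> t * (norm y)\<^sup>2"
proof -
  let ?b = "shift h t" and ?r = "sabs (shift h t)"
  have bs: "sa ?b" by (rule shift_sa)
  have rs: "sa ?r" using pos_sa[OF sabs_props(1)[OF bs]] .
  have bl: "clin ?b" using sa_clin[OF bs] .
  have rl: "clin ?r" using sa_clin[OF rs] .
  have rb: "?r (?b x) = ?b (?r x)" for x using sabs_props(3)[OF bs sa_bcl[OF bs], of x] by simp
  have rr: "?r (?r x) = ?b (?b x)" for x using sabs_props(2)[OF bs] .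
  define m where "m = (\<lambda>x. ?r x - ?b x)"
  have msa: "sa m" unfolding m_def using sa_diff[OF rs bs] .
  have pm: "?r (m v) + ?b (m v) = 0" for v
    by (simp add: m_def clin_diff[OF rl] clin_diff[OF bl] rr rb)
  have "m v \<in> specsp h t" for v using pm by (simp add: specsp_def)
  then have "cinner (m v) y = 0" for v using y by (simp add: orth_def)
  then have "cinner v (m y) = 0" for v using sa_adj[OF msa] by simp
  then have "m y = 0" using cinner_self_eq_zero by blast
  then have "?b y = ?r y" by (simp add: m_def)
  then have "Re (cinner y (?b y)) \<ge> 0" using pos_ge[OF sabs_props(1)[OF bs]] by simp
  then show ?thesis
    by (simp add: shift_def cinner_diff_right cinner_scaleR_right cinner_self_of_real)
qed

lemma spec_inv:
  assumes s: "bounded_clinear s" and sh: "\<And>x. s (h x) = h (s x)" and x: "x \<in> specsp h t"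
  shows "s x \<in> specsp h t"
proof -
  have sl: "clin s" using bcl_clin[OF s] .
  have sb: "s (shift h t y) = shift h t (s y)" for y by (simp add: shift_def clin_diff[OF sl] clin_scaleR[OF sl] sh)
  have sr: "s (sabs (shift h t) y) = sabs (shift h t) (s y)" for y
    using sabs_props(3)[OF shift_sa s sb] .
  have "s (sabs (shift h t) x + shift h t x) = 0" using x by (simp add: specsp_def clin_zero[OF sl])
  then show ?thesis by (simp add: specsp_def clin_add[OF sl] sb sr)
qed

end



section \<open>Subspaces reducing all spectral projections\<close>

context
  fixes h :: "'a::chilbert_space \<Rightarrow> 'a"
  assumes h: "sa h"
begin

lemma hl: "clin h" using sa_clin[OF h] .

lemma spec_h_inv: "x \<in> specsp h t \<Longrightarrow> h x \<in> specsp h t"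
  using spec_inv[OF h sa_bcl[OF h]] by blast

lemma spec_proj_commute: "proj (specsp h t) (h x) = h (proj (specsp h t) x)"
  using proj_commute_sa[OF spec_csub[OF h] h spec_h_inv] .

lemma spec_mono:
  assumes st: "s \<le> t" and y: "y \<in> specsp h s"
  shows "y \<in> specsp h t"
proof (cases "s = t")
  case True then show ?thesis using y by simp
next
  case False
  then have st': "s < t" using st by simp
  let ?P = "proj (specsp h t)"
  have Nt: "closed_csubspace (specsp h t)" by (rule spec_csub[OF h])
  have Ns: "closed_csubspace (specsp h s)" by (rule spec_csub[OF h])
  have "?P y \<in> specsp h s"
    by (rule spec_inv[OF h proj_bcl[OF Nt] _ y]) (simp add: spec_proj_commute)
  then have u1: "y - ?P y \<in> specsp h s" using csub_diff[OF Ns y] by blast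
  have u2: "y - ?P y \<in> orth (specsp h t)" by (rule proj_resid_orth[OF Nt])
  have a: "Re (cinner (y - ?P y) (h (y - ?P y))) \<le> s * (norm (y - ?P y))\<^sup>2" by (rule spec_le[OF h u1])
  have b: "Re (cinner (y - ?P y) (h (y - ?P y))) \<ge> t * (norm (y - ?P y))\<^sup>2" by (rule spec_ge[OF h u2])
  have "(t - s) * (norm (y - ?P y))\<^sup>2 \<le> 0" using a b by (simp add: algebra_simps)
  then have "(norm (y - ?P y))\<^sup>2 \<le> 0" using st' by (simp add: mult_le_0_iff)
  then have "y - ?P y = 0" by simp
  then have "?P y = y" by simp
  then show ?thesis using proj_in[OF Nt, of y] by (simp only:)
qed

lemma spec_bottom:
  assumes K: "\<And>x. norm (h x) \<le> K * norm x" and t: "t < - K"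
  shows "specsp h t = {0}"
proof
  show "{0} \<subseteq> specsp h t" using csub_0[OF spec_csub[OF h]] by simp
  show "specsp h t \<subseteq> {0}"
  proof
    fix y assume y: "y \<in> specsp h t"
    have "- Re (cinner y (h y)) \<le> norm y * norm (h y)" using abs_Re_cinner_le[of y "h y"] by linarith
    also have "\<dots> \<le> norm y * (K * norm y)" using K by (intro mult_left_mono) auto
    finally have "- K * (norm y)\<^sup>2 \<le> Re (cinner y (h y))" by (simp add: power2_eq_square algebra_simps)
    then have "(- K - t) * (norm y)\<^sup>2 \<le> 0" using spec_le[OF h y] by (simp add: algebra_simps)
    then have "(norm y)\<^sup>2 \<le> 0" using t by (simp add: mult_le_0_iff)
    then show "y \<in> {0}" by simp
  qed
qed

lemma spec_top:
  assumes K: "\<And>x. norm (h x) \<le> K * norm x" and t: "t > K"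
  shows "specsp h t = UNIV"
proof -
  have N: "closed_csubspace (specsp h t)" by (rule spec_csub[OF h])
  have "y \<in> specsp h t" for y
  proof -
    let ?u = "y - proj (specsp h t) y"
    have u: "?u \<in> orth (specsp h t)" by (rule proj_resid_orth[OF N])
    have "Re (cinner ?u (h ?u)) \<le> norm ?u * norm (h ?u)" by (rule Re_cinner_le)
    also have "\<dots> \<le> norm ?u * (K * norm ?u)" using K by (intro mult_left_mono) auto
    finally have "Re (cinner ?u (h ?u)) \<le> K * (norm ?u)\<^sup>2" by (simp add: power2_eq_square algebra_simps)
    then have "(t - K) * (norm ?u)\<^sup>2 \<le> 0" using spec_ge[OF h u] by (simp add: algebra_simps)
    then have "(norm ?u)\<^sup>2 \<le> 0" using t by (simp add: mult_le_0_iff)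
    then have "?u = 0" by simp
    then have "proj (specsp h t) y = y" by simp
    then show ?thesis using proj_in[OF N, of y] by (simp only:)
  qed
  then show ?thesis by blast
qed

end



lemma csub_Int: "closed_csubspace A \<Longrightarrow> closed_csubspace B \<Longrightarrow> closed_csubspace (A \<inter> B)"
  by (auto simp: closed_csubspace_def)

lemma le_eps:
  fixes d c :: real
  assumes c: "c \<ge> 0" and h: "\<And>e. e > 0 \<Longrightarrow> d \<le> e * c"
  shows "d \<le> 0"
proof (rule ccontr)
  assume "\<not> d \<le> 0"
  then have d: "d > 0" by simp
  have "d \<le> (d / (2 * (c + 1))) * c" using h[of "d / (2 * (c + 1))"] d c by simp
  also have "\<dots> = d * (c / (2 * (c + 1)))" by simp
  also have "\<dots> < d * 1"
  proof (rule mult_strict_left_mono[OF _ d])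
    show "c / (2 * (c + 1)) < 1" using c by (simp add: divide_less_eq)
  qed
  finally show False by simp
qed

theorem key_reduce:
  fixes h :: "'a::chilbert_space \<Rightarrow> 'a"
  assumes h: "sa h" and M: "closed_csubspace M"
    and red: "\<And>t y. y \<in> M \<Longrightarrow> proj (specsp h t) y \<in> M" and y0: "y0 \<in> M"
  shows "h y0 \<in> M"
proof -
  define Q where "Q = proj M"
  define N where "N t = specsp h t" for t
  define E where "E t = proj (N t)" for t
  have Nc: "closed_csubspace (N t)" for t unfolding N_def by (rule spec_csub[OF h])
  have Ql: "clin Q" unfolding Q_def using proj_clin[OF M] .
  have hl: "clin h" using sa_clin[OF h] .
  have QE: "Q (E t x) = E t (Q x)" for t x
    unfolding Q_def E_def using proj_commute_sa[OF M proj_sa'[OF Nc] red[unfolded N_def[symmetric]]] .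
  have QN: "z \<in> N t \<Longrightarrow> Q z \<in> N t" for z t
  proof -
    assume z: "z \<in> N t"
    have "Q z = Q (E t z)" using proj_id[OF Nc z] by (simp add: E_def)
    also have "\<dots> = E t (Q z)" by (rule QE)
    finally have e: "Q z = E t (Q z)" .
    have "E t (Q z) \<in> N t" unfolding E_def by (rule proj_in[OF Nc])
    then show ?thesis by (rule ssubst[OF e])
  qed
  have QO: "z \<in> orth (N t) \<Longrightarrow> Q z \<in> orth (N t)" for z t
  proof -
    assume z: "z \<in> orth (N t)"
    have "E t z = 0" using z proj_zero_iff[OF Nc] by (simp add: E_def)
    then have "E t (Q z) = 0" using QE[of t z] clin_zero[OF Ql] by simp
    then show ?thesis using proj_zero_iff[OF Nc] by (simp add: E_def)
  qed
  have hN: "z \<in> N t \<Longrightarrow> h z \<in> N t" for z t unfolding N_def by (rule spec_h_inv[OF h])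
  have hO: "z \<in> orth (N t) \<Longrightarrow> h z \<in> orth (N t)" for z t by (rule sa_orth_inv[OF h hN])
  define Good where "Good d a b \<longleftrightarrow> (\<forall>y. y \<in> M \<longrightarrow> y \<in> N b \<longrightarrow> y \<in> orth (N a)
      \<longrightarrow> norm (h y - Q (h y)) \<le> d * norm y)" for d a b
  have base: "Good d a b" if d: "d > 0" and ab: "a < b" "b \<le> a + d" for d a b
  proof -
    {
      fix y assume yM: "y \<in> M" and yb: "y \<in> N b" and ya: "y \<in> orth (N a)"
      define R where "R = N b \<inter> orth (N a)"
      define k where "k = shift h a"
      have ksa: "sa k" unfolding k_def shift_def by (rule sa_const_diff[OF h])
      have R: "closed_csubspace R" unfolding R_def by (rule csub_Int[OF Nc orth_csub])
      have kR: "k w \<in> R" if w: "w \<in> R" for w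
      proof -
        have "h w \<in> R" using w hN hO by (auto simp: R_def)
        moreover have "a *\<^sub>R w \<in> R" using w csub_scaleR[OF R] by blast
        ultimately show ?thesis using csub_diff[OF R] by (simp add: k_def shift_def)
      qed
      have kq: "Re (cinner w (k w)) = Re (cinner w (h w)) - a * (norm w)\<^sup>2" for w
        by (simp add: k_def shift_def cinner_diff_right cinner_scaleR_right cinner_self_of_real)
      have posR: "0 \<le> Re (cinner w (k w))" if w: "w \<in> R" for w
        using spec_ge[OF h, of w a] w kq[of w] by (simp add: R_def N_def)
      have upR: "Re (cinner w (k w)) \<le> d * (norm w)\<^sup>2" if w: "w \<in> R" for w
      proof -
        have "Re (cinner w (h w)) \<le> b * (norm w)\<^sup>2" using spec_le[OF h, of w b] w by (simp add: R_def N_def)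
        then have "Re (cinner w (k w)) \<le> (b - a) * (norm w)\<^sup>2" using kq[of w] by (simp add: algebra_simps)
        also have "\<dots> \<le> d * (norm w)\<^sup>2" using ab by (intro mult_right_mono) auto
        finally show ?thesis .
      qed
      have yR: "y \<in> R" using yb ya by (simp add: R_def)
      have ky: "norm (k y) \<le> d * norm y" by (rule norm_bound_restricted[OF ksa R kR posR upR yR])
      have Qy: "Q y = y" unfolding Q_def by (rule proj_id[OF M yM])
      have "h y - Q (h y) = k y - Q (k y)"
        by (simp add: k_def shift_def clin_diff[OF Ql] clin_scaleR[OF Ql] Qy)
      also have "norm (k y - Q (k y)) \<le> norm (k y)" unfolding Q_def by (rule proj_resid_norm[OF M])
      finally have "norm (h y - Q (h y)) \<le> d * norm y" using ky by simp
    }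
    then show ?thesis by (simp add: Good_def)
  qed
  have split: "Good d a b" if d: "d > 0" and am: "a \<le> m" and mb: "m \<le> b"
    and g1: "Good d a m" and g2: "Good d m b" for d a m b
  proof -
    {
      fix y assume yM: "y \<in> M" and yb: "y \<in> N b" and ya: "y \<in> orth (N a)"
      define y1 where "y1 = E m y"
      define y2 where "y2 = y - E m y"
      have y12: "y = y1 + y2" by (simp add: y1_def y2_def)
      have Nam: "N a \<subseteq> N m" using spec_mono[OF h am] by (auto simp: N_def)
      have Nmb: "N m \<subseteq> N b" using spec_mono[OF h mb] by (auto simp: N_def)
      have y1M: "y1 \<in> M" using red[OF yM] by (simp add: y1_def E_def N_def)
      have y1m: "y1 \<in> N m" unfolding y1_def E_def by (rule proj_in[OF Nc])
      have y1a: "y1 \<in> orth (N a)"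
      proof -
        have "cinner n y1 = 0" if n: "n \<in> N a" for n
        proof -
          have "cinner n y1 = cinner (E m n) y" by (simp add: y1_def E_def proj_sa[OF Nc])
          also have "E m n = n" using proj_id[OF Nc] n Nam by (auto simp: E_def)
          finally show ?thesis using ya n by (simp add: orth_def)
        qed
        then show ?thesis by (simp add: orth_def)
      qed
      have y2M: "y2 \<in> M" unfolding y2_def using csub_diff[OF M yM] y1M by (simp add: y1_def)
      have y2b: "y2 \<in> N b" unfolding y2_def using csub_diff[OF Nc yb] y1m Nmb by (auto simp: y1_def)
      have y2m: "y2 \<in> orth (N m)" unfolding y2_def E_def by (rule proj_resid_orth[OF Nc])
      define v1 where "v1 = h y1 - Q (h y1)"
      define v2 where "v2 = h y2 - Q (h y2)"
      have v: "h y - Q (h y) = v1 + v2"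
        by (simp add: v1_def v2_def y12 clin_add[OF hl] clin_add[OF Ql])
      have v1m: "v1 \<in> N m" unfolding v1_def using csub_diff[OF Nc hN[OF y1m] QN[OF hN[OF y1m]]] .
      have v2m: "v2 \<in> orth (N m)" unfolding v2_def using csub_diff[OF orth_csub hO[OF y2m] QO[OF hO[OF y2m]]] .
      have n1: "norm v1 \<le> d * norm y1" using g1 y1M y1m y1a by (simp add: Good_def v1_def)
      have n2: "norm v2 \<le> d * norm y2" using g2 y2M y2b y2m by (simp add: Good_def v2_def)
      have o1: "cinner v1 v2 = 0" using v2m v1m by (simp add: orth_def)
      have o2: "cinner y1 y2 = 0" using y2m y1m by (simp add: orth_def)
      have "(norm (v1 + v2))\<^sup>2 = (norm v1)\<^sup>2 + (norm v2)\<^sup>2" by (rule pythagoras[OF o1])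
      also have "\<dots> \<le> (d * norm y1)\<^sup>2 + (d * norm y2)\<^sup>2"
        using n1 n2 by (intro add_mono power_mono) auto
      also have "\<dots> = d\<^sup>2 * ((norm y1)\<^sup>2 + (norm y2)\<^sup>2)" by (simp add: power_mult_distrib algebra_simps)
      also have "(norm y1)\<^sup>2 + (norm y2)\<^sup>2 = (norm y)\<^sup>2" using pythagoras[OF o2] y12 by simp
      also have "d\<^sup>2 * (norm y)\<^sup>2 = (d * norm y)\<^sup>2" by (simp add: power_mult_distrib)
      finally have "(norm (v1 + v2))\<^sup>2 \<le> (d * norm y)\<^sup>2" .
      then have "norm (v1 + v2) \<le> d * norm y" by (rule power2_le_imp_le) (use d in auto)
      then have "norm (h y - Q (h y)) \<le> d * norm y" using v by simp
    }
    then show ?thesis by (simp add: Good_def)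
  qed
  obtain K where K: "K > 0" "\<And>x. norm (h x) \<le> K * norm x" using bcl_bound[OF sa_bcl[OF h]] by blast
  define a0 where "a0 = - K - 1"
  have chain: "Good d a0 (a0 + real (Suc n) * d)" if d: "d > 0" for d n
  proof (induction n)
    case 0 then show ?case using base[OF d, of a0 "a0 + d"] d by simp
  next
    case (Suc n)
    have "Good d (a0 + real (Suc n) * d) (a0 + real (Suc n) * d + d)" by (rule base[OF d]) (use d in auto)
    then have g2: "Good d (a0 + real (Suc n) * d) (a0 + real (Suc (Suc n)) * d)" by (simp add: algebra_simps)
    show ?case by (rule split[OF d _ _ Suc.IH g2]) (use d in auto)
  qed
  have bot: "N a0 = {0}" unfolding N_def by (rule spec_bottom[OF h K(2)]) (simp add: a0_def)
  have allo: "y \<in> orth (N a0)" for y by (simp add: bot orth_def)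
  have eps: "norm (h y0 - Q (h y0)) \<le> d * norm y0" if d: "d > 0" for d
  proof -
    obtain n where n: "2 * K + 1 < real n * d" using reals_Archimedean3[OF d] by blast
    have "K < a0 + real (Suc n) * d" using n d by (simp add: a0_def algebra_simps)
    then have top: "N (a0 + real (Suc n) * d) = UNIV" unfolding N_def by (rule spec_top[OF h K(2)])
    show ?thesis using chain[OF d, of n] y0 top allo by (simp add: Good_def)
  qed
  have "norm (h y0 - Q (h y0)) \<le> 0" by (rule le_eps[OF _ eps]) auto
  then have "h y0 - Q (h y0) = 0" by simp
  then have "h y0 = Q (h y0)" by (rule right_minus_eq[THEN iffD1])
  then have "Q (h y0) = h y0" by (rule sym)
  then show ?thesis using proj_in[OF M, of "h y0"] by (simp only: Q_def)
qed



section \<open>Invariant subspace lattices\<close>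

definition selfadj :: "('a::chilbert_space \<Rightarrow> 'a) set \<Rightarrow> bool" where
  "selfadj S \<longleftrightarrow> S \<subseteq> BH \<and> (\<forall>T\<in>S. \<exists>T'\<in>S. is_adjoint T' T)"

lemma BH_bcl: "T \<in> BH \<longleftrightarrow> bounded_clinear T" by (simp add: BH_def)

lemma commutant_mem: "b \<in> commutant S \<longleftrightarrow> bounded_clinear b \<and> (\<forall>T\<in>S. \<forall>x. b (T x) = T (b x))"
  by (auto simp: commutant_def BH_def fun_eq_iff)

lemma Lat_mem: "M \<in> Lat S \<longleftrightarrow> closed_csubspace M \<and> (\<forall>T\<in>S. \<forall>x\<in>M. T x \<in> M)"
  by (auto simp: Lat_def)

lemma selfadj_adj:
  assumes "selfadj S" "T \<in> S"
  obtains T' where "T' \<in> S" "\<And>x y. cinner (T x) y = cinner x (T' y)"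
  using assms by (auto simp: selfadj_def is_adjoint_def)

lemma selfadj_bcl: "selfadj S \<Longrightarrow> T \<in> S \<Longrightarrow> bounded_clinear T"
  by (auto simp: selfadj_def BH_def)

lemma Lat_proj_comm:
  assumes S: "selfadj S" and N: "N \<in> Lat S"
  shows "proj N \<in> commutant S"
proof -
  have Nc: "closed_csubspace N" using N by (simp add: Lat_mem)
  have "proj N (T x) = T (proj N x)" if T: "T \<in> S" for T x
  proof -
    obtain T' where T': "T' \<in> S" "\<And>x y. cinner (T x) y = cinner x (T' y)" using selfadj_adj[OF S T] by blast
    show ?thesis
      by (rule proj_commute[OF Nc bcl_clin[OF selfadj_bcl[OF S T]] T'(2)])
        (use N T T'(1) in \<open>auto simp: Lat_mem\<close>)
  qed
  then show ?thesis using proj_bcl[OF Nc] by (auto simp: commutant_mem)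
qed

lemma Lat_orth:
  assumes S: "selfadj S" and N: "N \<in> Lat S"
  shows "orth N \<in> Lat S"
proof -
  have "T y \<in> orth N" if T: "T \<in> S" and y: "y \<in> orth N" for T y
  proof -
    obtain T' where T': "T' \<in> S" "\<And>x y. cinner (T x) y = cinner x (T' y)" using selfadj_adj[OF S T] by blast
    have "cinner n (T y) = 0" if n: "n \<in> N" for n
    proof -
      have "T' n \<in> N" using N T'(1) n by (simp add: Lat_mem)
      then have "cinner y (T' n) = 0" using y cinner_eq_zero_sym by (auto simp: orth_def)
      then have "cinner (T y) n = 0" using T'(2) by simp
      then show ?thesis using cinner_eq_zero_sym by blast
    qed
    then show ?thesis by (simp add: orth_def)
  qed
  then show ?thesis using orth_csub by (simp add: Lat_mem)
qed

lemma adj_in_commutant: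
  assumes S: "selfadj S" and b: "b \<in> commutant S"
    and adj: "\<And>x y. cinner (b x) y = cinner x (b' y)" and b'bcl: "bounded_clinear b'"
  shows "b' \<in> commutant S"
proof -
  have "b' (T x) = T (b' x)" if T: "T \<in> S" for T x
  proof -
    obtain T' where T': "T' \<in> S" "\<And>x y. cinner (T x) y = cinner x (T' y)" using selfadj_adj[OF S T] by blast
    have iT: "cinner u (T w) = cinner (T' u) w" for u w
    proof -
      have "cinner u (T w) = cnj (cinner (T w) u)" by (rule cinner_conj_commute)
      also have "\<dots> = cnj (cinner w (T' u))" by (simp only: T'(2))
      also have "\<dots> = cinner (T' u) w" by (rule cinner_conj_commute[symmetric])
      finally show ?thesis .
    qed
    have bT': "b (T' z) = T' (b z)" for z using b T'(1) by (simp add: commutant_mem)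
    show ?thesis
    proof (rule cinner_ext)
      fix z
      have "cinner z (b' (T x)) = cinner (b z) (T x)" by (simp add: adj)
      also have "\<dots> = cinner (T' (b z)) x" by (rule iT)
      also have "\<dots> = cinner (b (T' z)) x" by (simp add: bT')
      also have "\<dots> = cinner (T' z) (b' x)" by (rule adj)
      also have "\<dots> = cinner z (T (b' x))" by (rule iT[symmetric])
      finally show "cinner z (b' (T x)) = cinner z (T (b' x))" .
    qed
  qed
  then show ?thesis using b'bcl by (simp add: commutant_mem)
qed

lemma selfadj_commutant: "selfadj S \<Longrightarrow> selfadj (commutant S)"
proof -
  assume S: "selfadj S"
  have "\<exists>b'\<in>commutant S. is_adjoint b' b" if b: "b \<in> commutant S" for b
  proof -
    obtain b' where b': "bounded_clinear b'" "\<And>x y. cinner (b x) y = cinner x (b' y)"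
      using adjoint_exists[of b] b by (auto simp: commutant_mem)
    have "b' \<in> commutant S" by (rule adj_in_commutant[OF S b b'(2) b'(1)])
    then show ?thesis using b'(2) by (auto simp: is_adjoint_def)
  qed
  then show ?thesis by (auto simp: selfadj_def commutant_def)
qed

definition Cond :: "('a::chilbert_space \<Rightarrow> 'a) set \<Rightarrow> 'a set \<Rightarrow> bool" where
  "Cond S M \<longleftrightarrow> (\<forall>N L. N \<in> Lat S \<longrightarrow> L \<in> Lat S \<longrightarrow> N \<inter> L \<subseteq> {0} \<longrightarrow> (\<forall>x. \<exists>n\<in>N. \<exists>l\<in>L. x = n + l)
      \<longrightarrow> (\<forall>x\<in>M. \<exists>n\<in>M \<inter> N. \<exists>l\<in>M \<inter> L. x = n + l))"

lemma Lat_comm_Cond: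
  assumes S: "selfadj S" and M: "M \<in> Lat (commutant S)"
  shows "Cond S M"
proof -
  have Mc: "closed_csubspace M" using M by (simp add: Lat_mem)
  let ?Q = "proj M"
  have red: "\<And>z. z \<in> N \<Longrightarrow> ?Q z \<in> N" if N: "N \<in> Lat S" for N
  proof -
    fix z assume z: "z \<in> N"
    have Nc: "closed_csubspace N" using N by (simp add: Lat_mem)
    have PM: "proj N x \<in> M" if "x \<in> M" for x using M Lat_proj_comm[OF S N] that by (simp add: Lat_mem)
    have "?Q (proj N z) = proj N (?Q z)" by (rule proj_commute_sa[OF Mc proj_sa'[OF Nc] PM])
    then have "?Q z = proj N (?Q z)" using proj_id[OF Nc z] by simp
    moreover have "proj N (?Q z) \<in> N" by (rule proj_in[OF Nc])
    ultimately show "?Q z \<in> N" by (rule ssubst)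
  qed
  {
    fix N L x assume N: "N \<in> Lat S" and L: "L \<in> Lat S" and NL: "N \<inter> L \<subseteq> {0}"
      and sp: "\<forall>x. \<exists>n\<in>N. \<exists>l\<in>L. x = n + l" and x: "x \<in> M"
    obtain n l where nl: "n \<in> N" "l \<in> L" "x = n + l" using sp by blast
    have Nc: "closed_csubspace N" and Lc: "closed_csubspace L" using N L by (auto simp: Lat_mem)
    have Qn: "?Q n \<in> N" using red[OF N nl(1)] .
    have Ql: "?Q l \<in> L" using red[OF L nl(2)] .
    have "?Q x = x" using proj_id[OF Mc x] .
    then have "n + l = ?Q n + ?Q l" using nl(3) proj_add[OF Mc] by simp
    then have "n - ?Q n = ?Q l - l" by (simp add: algebra_simps)
    moreover have "n - ?Q n \<in> N" using csub_diff[OF Nc nl(1) Qn] .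
    moreover have "?Q l - l \<in> L" using csub_diff[OF Lc Ql nl(2)] .
    ultimately have "n - ?Q n \<in> N \<inter> L" by simp
    then have "n - ?Q n = 0" using NL by blast
    then have "?Q n = n" by simp
    then have nM: "n \<in> M" using proj_in[OF Mc, of n] by (simp only:)
    have lM: "l \<in> M" using csub_diff[OF Mc x nM] nl(3) by simp
    have "\<exists>n\<in>M \<inter> N. \<exists>l\<in>M \<inter> L. x = n + l" using nM lM nl by blast
  }
  then show ?thesis by (simp add: Cond_def)
qed

lemma Cond_Lat_comm:
  assumes S: "selfadj S" and Mc: "closed_csubspace M" and C: "Cond S M"
  shows "M \<in> Lat (commutant S)"
proof -
  have red: "proj N x \<in> M" if N: "N \<in> Lat S" and x: "x \<in> M" for N x
  proof -
    have Nc: "closed_csubspace N" using N by (simp add: Lat_mem)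
    have O: "orth N \<in> Lat S" by (rule Lat_orth[OF S N])
    have NO: "N \<inter> orth N \<subseteq> {0}" using orth_inter by blast
    have sp: "\<forall>x. \<exists>n\<in>N. \<exists>l\<in>orth N. x = n + l"
    proof
      fix x
      have "x = proj N x + (x - proj N x)" by simp
      then show "\<exists>n\<in>N. \<exists>l\<in>orth N. x = n + l" using proj_in[OF Nc] proj_resid_orth[OF Nc] by blast
    qed
    obtain n l where nl: "n \<in> M \<inter> N" "l \<in> M \<inter> orth N" "x = n + l"
      using C N O NO sp x unfolding Cond_def by blast
    have "proj N x = n"
    proof (rule proj_eqI[OF Nc])
      show "n \<in> N" using nl by blast
      fix m assume m: "m \<in> N"
      have "x - n = l" using nl(3) by simp
      then show "cinner m (x - n) = 0" using nl(2) m by (simp add: orth_def)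
    qed
    then show ?thesis using nl by simp
  qed
  have saM: "h y \<in> M" if h: "sa h" and hc: "h \<in> commutant S" and y: "y \<in> M" for h y
  proof (rule key_reduce[OF h Mc _ y])
    fix t z assume z: "z \<in> M"
    have "specsp h t \<in> Lat S"
    proof -
      have "T w \<in> specsp h t" if T: "T \<in> S" and w: "w \<in> specsp h t" for T w
      proof (rule spec_inv[OF h selfadj_bcl[OF S T] _ w])
        fix x show "T (h x) = h (T x)" using hc T by (simp add: commutant_mem)
      qed
      then show ?thesis using spec_csub[OF h] by (simp add: Lat_mem)
    qed
    then show "proj (specsp h t) z \<in> M" using red z by blast
  qed
  have "b y \<in> M" if b: "b \<in> commutant S" and y: "y \<in> M" for b y
  proof -
    have bb: "bounded_clinear b" using b by (simp add: commutant_mem)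
    obtain b' where b': "bounded_clinear b'" "\<And>x y. cinner (b x) y = cinner x (b' y)"
      using adjoint_exists[OF bb] by blast
    have b'c: "b' \<in> commutant S" by (rule adj_in_commutant[OF S b b'(2) b'(1)])
    define h1 where "h1 = (\<lambda>x. (1/2 :: complex) *\<^sub>C (b x + b' x))"
    define h2 where "h2 = (\<lambda>x. (- \<i>/2) *\<^sub>C (b x - b' x))"
    have h1b: "bounded_clinear h1" unfolding h1_def by (rule bcl_scaleC[OF bcl_add[OF bb b'(1)]])
    have h2b: "bounded_clinear h2" unfolding h2_def by (rule bcl_scaleC[OF bcl_diff[OF bb b'(1)]])
    have b'adj: "cinner (b' x) z = cinner x (b z)" for x z
      using b'(2)[of z x] cinner_conj_commute[of "b z" x] cinner_conj_commute[of z "b' x"] by simp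
    have h1s: "sa h1" using h1b
      by (simp add: sa_def h1_def cinner_scaleC_left cinner_scaleC_right cinner_add_left cinner_add_right b'(2) b'adj)
    have h2s: "sa h2" using h2b
      by (simp add: sa_def h2_def cinner_scaleC_left cinner_scaleC_right cinner_diff_left cinner_diff_right
          b'(2) b'adj algebra_simps)
    have bl: "clin b" and b'l: "clin b'" using bcl_clin bb b'(1) by auto
    have bT: "b (T x) = T (b x)" "b' (T x) = T (b' x)" "clin T" if T: "T \<in> S" for T x
      using b b'c T bcl_clin[OF selfadj_bcl[OF S T]] by (auto simp: commutant_mem)
    have h1c: "h1 \<in> commutant S"
    proof -
      have "h1 (T x) = T (h1 x)" if T: "T \<in> S" for T x
        using bT[OF T] by (simp add: h1_def clin_scaleC clin_add)
      then show ?thesis using h1b by (simp add: commutant_mem)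
    qed
    have h2c: "h2 \<in> commutant S"
    proof -
      have "h2 (T x) = T (h2 x)" if T: "T \<in> S" for T x
        using bT[OF T] by (simp add: h2_def clin_scaleC clin_diff)
      then show ?thesis using h2b by (simp add: commutant_mem)
    qed
    have "b y = h1 y + \<i> *\<^sub>C h2 y"
    proof -
      have "h1 y + \<i> *\<^sub>C h2 y = (1/2 :: complex) *\<^sub>C (b y + b' y) + (1/2 :: complex) *\<^sub>C (b y - b' y)"
        by (simp add: h1_def h2_def scaleC_scaleC)
      also have "\<dots> = (1/2 :: complex) *\<^sub>C b y + (1/2 :: complex) *\<^sub>C b y"
        by (simp add: scaleC_add_right scaleC_diff_right)
      also have "\<dots> = ((1/2 :: complex) + 1/2) *\<^sub>C b y" by (rule scaleC_add_left[symmetric])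
      also have "\<dots> = b y" proof -
        have "(1/2 :: complex) + 1/2 = 1" by simp
        then show ?thesis by (simp only: scaleC_one)
      qed
      finally show ?thesis by (rule sym)
    qed
    moreover have "h1 y \<in> M" using saM[OF h1s h1c y] .
    moreover have "h2 y \<in> M" using saM[OF h2s h2c y] .
    ultimately show ?thesis using csub_add[OF Mc] csub_scaleC[OF Mc] by simp
  qed
  then show ?thesis using Mc by (simp add: Lat_mem)
qed

lemma Lat_comm_iff: "selfadj S \<Longrightarrow> closed_csubspace M \<Longrightarrow> M \<in> Lat (commutant S) \<longleftrightarrow> Cond S M"
  using Lat_comm_Cond Cond_Lat_comm by blast



lemma invertible_props:
  assumes "invertible_op T"
  obtains U where "bounded_clinear T" "bounded_clinear U" "\<And>x. U (T x) = x" "\<And>x. T (U x) = x"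
proof -
  obtain U where U: "U \<in> BH" "U \<circ> T = id" "T \<circ> U = id" and T: "T \<in> BH"
    using assms by (auto simp: invertible_op_def)
  have "U (T x) = x" for x using U(2) by (metis comp_apply id_apply)
  moreover have "T (U x) = x" for x using U(3) by (metis comp_apply id_apply)
  ultimately show ?thesis using that T U(1) by (auto simp: BH_def)
qed

lemma image_csub:
  assumes T: "bounded_clinear T" and U: "bounded_clinear U" and UT: "\<And>x. U (T x) = x"
    and TU: "\<And>x. T (U x) = x" and M: "closed_csubspace M"
  shows "closed_csubspace (T ` M)"
proof -
  have eq: "T ` M = U -` M"
  proof
    show "T ` M \<subseteq> U -` M" using UT by auto
    show "U -` M \<subseteq> T ` M"
    proof
      fix x assume "x \<in> U -` M"
      then have "U x \<in> M" by simp
      then have "T (U x) \<in> T ` M" by blast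
      then show "x \<in> T ` M" by (simp only: TU)
    qed
  qed
  have "closed (U -` M)" by (rule continuous_closed_vimage[OF csub_closed[OF M] bcl_cont[OF U]])
  then have cl: "closed (T ` M)" by (simp only: eq)
  have Tl: "clin T" using bcl_clin[OF T] .
  have "0 \<in> T ` M" using csub_0[OF M] clin_zero[OF Tl] by (metis image_eqI)
  moreover have "a + b \<in> T ` M" if ab: "a \<in> T ` M" "b \<in> T ` M" for a b
  proof -
    obtain u v where uv: "u \<in> M" "v \<in> M" "a = T u" "b = T v" using ab by blast
    then have "a + b = T (u + v)" by (simp add: clin_add[OF Tl])
    then show ?thesis using csub_add[OF M uv(1,2)] by blast
  qed
  moreover have "c *\<^sub>C a \<in> T ` M" if a: "a \<in> T ` M" for a c
  proof -
    obtain u where u: "u \<in> M" "a = T u" using a by blast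
    then have "c *\<^sub>C a = T (c *\<^sub>C u)" by (simp add: clin_scaleC[OF Tl])
    then show ?thesis using csub_scaleC[OF M u(1)] by blast
  qed
  ultimately show ?thesis using cl by (simp add: closed_csubspace_def)
qed

lemma image_image_inv: "(\<And>x. U (T x) = x) \<Longrightarrow> U ` T ` M = M"
  by (simp add: image_image)

lemma Col_inv:
  assumes TC: "T \<in> Col S" and T: "bounded_clinear T" and U: "bounded_clinear U"
    and UT: "\<And>x. U (T x) = x" and TU: "\<And>x. T (U x) = x"
  shows "U \<in> Col S"
proof -
  have "invertible_op U" unfolding invertible_op_def using T U UT TU by (auto simp: BH_def fun_eq_iff)
  moreover have "M \<in> Lat S \<longleftrightarrow> U ` M \<in> Lat S" if M: "closed_csubspace M" for M
  proof -
    have UM: "closed_csubspace (U ` M)" by (rule image_csub[OF U T TU UT M])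
    have "U ` M \<in> Lat S \<longleftrightarrow> T ` U ` M \<in> Lat S" using TC UM by (simp add: Col_def)
    also have "T ` U ` M = M" by (rule image_image_inv[where U=T and T=U, OF TU])
    finally show ?thesis by simp
  qed
  ultimately show ?thesis by (simp add: Col_def)
qed

lemma Cond_transport:
  assumes TC: "T \<in> Col S" and C: "Cond S M"
  shows "Cond S (T ` M)"
proof -
  obtain U where T: "bounded_clinear T" and U: "bounded_clinear U" and UT: "\<And>x. U (T x) = x"
    and TU: "\<And>x. T (U x) = x" using TC invertible_props by (auto simp: Col_def)
  have UC: "U \<in> Col S" by (rule Col_inv[OF TC T U UT TU])
  have Tl: "clin T" and Ul: "clin U" using bcl_clin T U by auto
  {
    fix N L y assume N: "N \<in> Lat S" and L: "L \<in> Lat S" and NL: "N \<inter> L \<subseteq> {0}"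
      and sp: "\<forall>x. \<exists>n\<in>N. \<exists>l\<in>L. x = n + l" and y: "y \<in> T ` M"
    have Nc: "closed_csubspace N" using N by (simp add: Lat_mem)
    have Lc: "closed_csubspace L" using L by (simp add: Lat_mem)
    have UN: "U ` N \<in> Lat S" using UC Nc N unfolding Col_def by blast
    have UL: "U ` L \<in> Lat S" using UC Lc L unfolding Col_def by blast
    have UNL: "U ` N \<inter> U ` L \<subseteq> {0}"
    proof
      fix z assume "z \<in> U ` N \<inter> U ` L"
      then obtain n l where nl: "n \<in> N" "l \<in> L" "z = U n" "z = U l" by blast
      have "T z = n" using TU nl(3) by simp
      moreover have "T z = l" using TU nl(4) by simp
      ultimately have "T z \<in> N \<inter> L" using nl(1,2) by simp
      then have "T z = 0" using NL by blast
      then have "U (T z) = 0" using clin_zero[OF Ul] by simp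
      then show "z \<in> {0}" using UT by simp
    qed
    have Usp: "\<forall>x. \<exists>n\<in>U ` N. \<exists>l\<in>U ` L. x = n + l"
    proof
      fix x
      obtain n l where nl: "n \<in> N" "l \<in> L" "T x = n + l" using sp by blast
      have "x = U n + U l" using arg_cong[OF nl(3), of U] UT clin_add[OF Ul] by simp
      then show "\<exists>n\<in>U ` N. \<exists>l\<in>U ` L. x = n + l" using nl by blast
    qed
    obtain x where x: "x \<in> M" "y = T x" using y by blast
    have "\<exists>n\<in>M \<inter> U ` N. \<exists>l\<in>M \<inter> U ` L. x = n + l"
      using C[unfolded Cond_def, rule_format, OF UN UL UNL Usp[rule_format] x(1)] .
    then obtain n l where nl: "n \<in> M \<inter> U ` N" "l \<in> M \<inter> U ` L" "x = n + l" by blast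
    have "y = T n + T l" using x(2) nl(3) clin_add[OF Tl] by simp
    moreover have "T n \<in> T ` M \<inter> N"
    proof -
      obtain n' where n': "n' \<in> N" "n = U n'" using nl(1) by blast
      have "T n = n'" using n'(2) TU by simp
      then show ?thesis using n'(1) nl(1) by blast
    qed
    moreover have "T l \<in> T ` M \<inter> L"
    proof -
      obtain l' where l': "l' \<in> L" "l = U l'" using nl(2) by blast
      have "T l = l'" using l'(2) TU by simp
      then show ?thesis using l'(1) nl(2) by blast
    qed
    ultimately have "\<exists>n\<in>T ` M \<inter> N. \<exists>l\<in>T ` M \<inter> L. y = n + l" by blast
  }
  then show ?thesis by (simp add: Cond_def)
qed

lemma Col_sub_comm:
  assumes S: "selfadj S"
  shows "Col S \<subseteq> Col (commutant S)"
proof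
  fix T assume TC: "T \<in> Col S"
  obtain U where T: "bounded_clinear T" and U: "bounded_clinear U" and UT: "\<And>x. U (T x) = x"
    and TU: "\<And>x. T (U x) = x" using TC invertible_props by (auto simp: Col_def)
  have UC: "U \<in> Col S" by (rule Col_inv[OF TC T U UT TU])
  have "M \<in> Lat (commutant S) \<longleftrightarrow> T ` M \<in> Lat (commutant S)" if M: "closed_csubspace M" for M
  proof -
    have TM: "closed_csubspace (T ` M)" by (rule image_csub[OF T U UT TU M])
    have "Cond S M \<longleftrightarrow> Cond S (T ` M)"
    proof
      assume "Cond S M" then show "Cond S (T ` M)" by (rule Cond_transport[OF TC])
    next
      assume "Cond S (T ` M)"
      then have "Cond S (U ` T ` M)" by (rule Cond_transport[OF UC])
      then show "Cond S M" by (simp only: image_image_inv[where U=U and T=T, OF UT])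
    qed
    then show ?thesis using Lat_comm_iff[OF S M] Lat_comm_iff[OF S TM] by simp
  qed
  then show "T \<in> Col (commutant S)" using TC by (simp add: Col_def)
qed

lemma Lat_double:
  assumes S: "selfadj S"
  shows "Lat (commutant (commutant S)) = Lat S"
proof
  have sub: "S \<subseteq> commutant (commutant S)"
  proof
    fix T assume T: "T \<in> S"
    have "T (b x) = b (T x)" if "b \<in> commutant S" for b x using that T by (simp add: commutant_mem)
    then show "T \<in> commutant (commutant S)" using selfadj_bcl[OF S T] by (simp add: commutant_mem)
  qed
  then show "Lat (commutant (commutant S)) \<subseteq> Lat S" by (auto simp: Lat_def)
next
  show "Lat S \<subseteq> Lat (commutant (commutant S))"
  proof
    fix M assume M: "M \<in> Lat S"
    have Mc: "closed_csubspace M" using M by (simp add: Lat_mem)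
    have P: "proj M \<in> commutant S" by (rule Lat_proj_comm[OF S M])
    have "b x \<in> M" if b: "b \<in> commutant (commutant S)" and x: "x \<in> M" for b x
    proof -
      have "b (proj M x) = proj M (b x)" using b P by (simp add: commutant_mem)
      then have "b x = proj M (b x)" using proj_id[OF Mc x] by simp
      moreover have "proj M (b x) \<in> M" by (rule proj_in[OF Mc])
      ultimately show ?thesis by (rule ssubst)
    qed
    then show "M \<in> Lat (commutant (commutant S))" using Mc by (simp add: Lat_mem)
  qed
qed

lemma Col_Lat_eq: "Lat A = Lat B \<Longrightarrow> Col A = Col B"
  by (simp add: Col_def)

theorem corollary3p12:
  fixes A :: "('a::chilbert_space \<Rightarrow> 'a) set"
  assumes "von_neumann_algebra A"
  shows "Col A = Col (commutant A)"
proof -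
  have S: "selfadj A" using assms by (simp add: von_neumann_algebra_def selfadj_def)
  have S': "selfadj (commutant A)" by (rule selfadj_commutant[OF S])
  have 1: "Col A \<subseteq> Col (commutant A)" by (rule Col_sub_comm[OF S])
  have 2: "Col (commutant A) \<subseteq> Col (commutant (commutant A))" by (rule Col_sub_comm[OF S'])
  have 3: "Col (commutant (commutant A)) = Col A" by (rule Col_Lat_eq[OF Lat_double[OF S]])
  show ?thesis using 1 2 3 by blast
qed



end
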